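(* In the following setting: $\Phi=\Psi+\mathcal{X}$, $\Psi=f+h$ with $f$ differentiable with $L_f$-Lipschitz gradient, $h$ convex differentiable with $L_h$-Lipschitz gradient, $L_\Psi=L_f+L_h>0$, $\mathcal{X}$ proper closed convex with bounded domain; $\mathcal{P}(x,y,c):=\operatorname{argmin}_u\{\langle y,u\rangle+\frac1{2c}\|u-x\|^2+\mathcal{X}(u)\}$, $\mathcal{G}(x,y,c):=\frac1c[x-\mathcal{P}(x,y,c)]$, with a constant $M$ such that $\|\mathcal{P}(x,y,c)\|\le M$ for all $c>0$, $x,y$; a stochastic oracle returning at each call with input $x$ a vector $G(x,\xi)$ with $\mathbb{E}[G(x,\xi)]=\nabla\Psi(x)$ and $\mathbb{E}\|G(x,\xi)-\nabla\Psi(x)\|^2\le\sigma^2$. Given $N\ge1$ and a parameter $\tilde D>0$, run the mini-batch RSAG method: draw $R$ with $\mathrm{Prob}\{R=k\}=p_k$, set $x^{ag}_0=x_0$, and for $k=1,\ldots,R$ $$x^{md}_k=(1-\alpha_k)x^{ag}_{k-1}+\alpha_kx_{k-1},\ \bar G_k=\frac1{m_k}\sum_{i=1}^{m_k}G(x^{md}_k,\xi_{k,i}),\ x_k=\mathcal{P}(x_{k-1},\bar G_k,\lambda_k),\ x^{ag}_k=\mathcal{P}(x^{md}_k,\bar G_k,\beta_k),$$ with $\alpha_k=\frac2{k+1}$, $\beta_k=\frac1{2L_\Psi}$, $\lambda_k=\frac{k\beta_k}{2}$, $\Gamma_k=\frac{2}{k(k+1)}$, $p_k=\frac{\Gamma_k^{-1}\beta_k(1-L_\Psi\beta_k)}{\sum_{j=1}^N\Gamma_j^{-1}\beta_j(1-L_\Psi\beta_j)}$,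 and $m_k=\big\lceil\frac{\sigma^2k}{L_\Psi\tilde D^2}\big\rceil$ for $k=1,2,\ldots$. Assume an optimal solution $x^*$ of $\min\Phi$ exists. Then for any $N\ge1$, $$\mathbb{E}[\|\mathcal{G}(x^{md}_R,\nabla\Psi(x^{md}_R),\beta_R)\|^2]\le96L_\Psi\Big[\frac{4L_\Psi\|x_0-x^*\|^2}{N^3}+\frac{L_f(\|x^*\|^2+2M^2)+3\tilde D^2}{N}\Big].$$
   Context: $\|\cdot\|$ is the Euclidean norm. Expectations are over $R$ (drawn independently) and the oracle samples $\xi_{k,i}$. *)

theory Defs
  imports "HOL-Probability.Probability"
begin

text \<open>Extended-real-valued functions (value \<infinity> outside the domain).\<close>

definition proper_efun :: "('a \<Rightarrow> ereal) \<Rightarrow> bool" where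
  "proper_efun X \<longleftrightarrow> (\<forall>x. X x \<noteq> -\<infinity>) \<and> (\<exists>x. X x \<noteq> \<infinity>)"

definition closed_efun :: "('a::topological_space \<Rightarrow> ereal) \<Rightarrow> bool" where
  "closed_efun X \<longleftrightarrow> closed {(x, t::real). X x \<le> ereal t}"

definition convex_efun :: "('a::real_vector \<Rightarrow> ereal) \<Rightarrow> bool" where
  "convex_efun X \<longleftrightarrow> (\<forall>x y. \<forall>u::real. 0 < u \<and> u < 1 \<longrightarrow>
      X ((1 - u) *\<^sub>R x + u *\<^sub>R y) \<le> ereal (1 - u) * X x + ereal u * X y)"

definition edom :: "('a \<Rightarrow> ereal) \<Rightarrow> 'a set" where
  "edom X = {x. X x < \<infinity>}"

definition prox_map :: "('a::real_inner \<Rightarrow> ereal) \<Rightarrow> 'a \<Rightarrow> 'a \<Rightarrow> real \<Rightarrow> 'a" where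
  "prox_map X x y c = (THE u. \<forall>v.
      ereal (inner y u + (1 / (2 * c)) * (norm (u - x))\<^sup>2) + X u
        \<le> ereal (inner y v + (1 / (2 * c)) * (norm (v - x))\<^sup>2) + X v)"

definition grad_map :: "('a::real_inner \<Rightarrow> ereal) \<Rightarrow> 'a \<Rightarrow> 'a \<Rightarrow> real \<Rightarrow> 'a" where
  "grad_map X x y c = (1 / c) *\<^sub>R (x - prox_map X x y c)"

text \<open>Parameters of the RSAG method (L = L_Psi).\<close>
definition rsag_alpha :: "nat \<Rightarrow> real" where "rsag_alpha k = 2 / (real k + 1)"
definition rsag_beta :: "real \<Rightarrow> nat \<Rightarrow> real" where "rsag_beta L k = 1 / (2 * L)"
definition rsag_lambda :: "real \<Rightarrow> nat \<Rightarrow> real" where "rsag_lambda L k = real k * rsag_beta L k / 2"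
definition rsag_Gamma :: "nat \<Rightarrow> real" where "rsag_Gamma k = 2 / (real k * (real k + 1))"

definition rsag_prob :: "real \<Rightarrow> nat \<Rightarrow> nat \<Rightarrow> real" where
  "rsag_prob L N k =
     (inverse (rsag_Gamma k) * rsag_beta L k * (1 - L * rsag_beta L k)) /
     (\<Sum>j = 1..N. inverse (rsag_Gamma j) * rsag_beta L j * (1 - L * rsag_beta L j))"

definition rsag_batch :: "real \<Rightarrow> real \<Rightarrow> real \<Rightarrow> nat \<Rightarrow> nat" where
  "rsag_batch \<sigma> L D k = nat \<lceil>\<sigma>\<^sup>2 * real k / (L * D\<^sup>2)\<rceil>"

text \<open>State (x_k, x^ag_k) of the mini-batch RSAG method; \<omega> (k,i) is the sample \<xi>_{k,i}.\<close>
fun rsag_state :: "('a::real_inner \<Rightarrow> ereal) \<Rightarrow> ('a \<Rightarrow> 'b \<Rightarrow> 'a) \<Rightarrow> real \<Rightarrow> real \<Rightarrow> real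
      \<Rightarrow> 'a \<Rightarrow> (nat \<times> nat \<Rightarrow> 'b) \<Rightarrow> nat \<Rightarrow> 'a \<times> 'a" where
  "rsag_state X G L \<sigma> D x0 \<omega> 0 = (x0, x0)"
| "rsag_state X G L \<sigma> D x0 \<omega> (Suc n) =
     (let k = Suc n;
          (x, xag) = rsag_state X G L \<sigma> D x0 \<omega> n;
          xmd = (1 - rsag_alpha k) *\<^sub>R xag + rsag_alpha k *\<^sub>R x;
          m = rsag_batch \<sigma> L D k;
          Gbar = (1 / real m) *\<^sub>R (\<Sum>i = 1..m. G xmd (\<omega> (k, i)))
      in (prox_map X x Gbar (rsag_lambda L k), prox_map X xmd Gbar (rsag_beta L k)))"

definition rsag_xmd :: "('a::real_inner \<Rightarrow> ereal) \<Rightarrow> ('a \<Rightarrow> 'b \<Rightarrow> 'a) \<Rightarrow> real \<Rightarrow> real \<Rightarrow> real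
      \<Rightarrow> 'a \<Rightarrow> (nat \<times> nat \<Rightarrow> 'b) \<Rightarrow> nat \<Rightarrow> 'a" where
  "rsag_xmd X G L \<sigma> D x0 \<omega> k =
     (let (x, xag) = rsag_state X G L \<sigma> D x0 \<omega> (k - 1)
      in (1 - rsag_alpha k) *\<^sub>R xag + rsag_alpha k *\<^sub>R x)"

end

theory Submission
  imports Defs
begin


lemma norm_convex_comb_sq:
  fixes a b :: "'a::real_inner"
  shows "(norm ((1 - t) *\<^sub>R a + t *\<^sub>R b))\<^sup>2 = (1 - t) * (norm a)\<^sup>2 + t * (norm b)\<^sup>2 - t * (1 - t) * (norm (a - b))\<^sup>2"
  unfolding power2_norm_eq_inner
  by (simp add: inner_add inner_diff inner_scaleR inner_commute algebra_simps)

definition qf :: "'a::real_inner \<Rightarrow> 'a \<Rightarrow> real \<Rightarrow> 'a \<Rightarrow> real" where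
  "qf x y c u = inner y u + (1 / (2 * c)) * (norm (u - x))\<^sup>2"

lemma qf_comb:
  fixes a b :: "'a::real_inner"
  shows "qf x y c ((1 - t) *\<^sub>R a + t *\<^sub>R b) = (1 - t) * qf x y c a + t * qf x y c b - t * (1 - t) * (norm (a - b))\<^sup>2 / (2 * c)"
proof -
  have "(1 - t) *\<^sub>R a + t *\<^sub>R b - x = (1 - t) *\<^sub>R (a - x) + t *\<^sub>R (b - x)"
    by (simp add: algebra_simps)
  then have "(norm ((1 - t) *\<^sub>R a + t *\<^sub>R b - x))\<^sup>2 = (1 - t) * (norm (a - x))\<^sup>2 + t * (norm (b - x))\<^sup>2 - t * (1 - t) * (norm (a - b))\<^sup>2"
    using norm_convex_comb_sq[of t "a - x" "b - x"] by simp
  then have e: "(1 / (2 * c)) * (norm ((1 - t) *\<^sub>R a + t *\<^sub>R b - x))\<^sup>2 = (1 / (2 * c)) * ((1 - t) * (norm (a - x))\<^sup>2 + t * (norm (b - x))\<^sup>2 - t * (1 - t) * (norm (a - b))\<^sup>2)"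
    by simp
  show ?thesis
    unfolding qf_def e by (simp add: inner_add_right inner_diff_right algebra_simps diff_divide_distrib add_divide_distrib)
qed

lemma continuous_qf: "continuous_on UNIV (qf x y c)"
  unfolding qf_def by (intro continuous_intros)

locale proxX =
  fixes X :: "'a::euclidean_space \<Rightarrow> ereal"
  assumes proper: "proper_efun X" and closedX: "closed_efun X" and convX: "convex_efun X"
    and bddX: "bounded (edom X)"
begin

definition Xr :: "'a \<Rightarrow> real" where "Xr u = real_of_ereal (X u)"

lemma X_not_minf: "X u \<noteq> -\<infinity>"
  using proper unfolding proper_efun_def by auto

lemma X_finite: "X u \<noteq> \<infinity> \<Longrightarrow> X u = ereal (Xr u)"
  using X_not_minf[of u] unfolding Xr_def by (cases "X u") auto

lemma lsc:
  assumes "eventually (\<lambda>n. X (u n) \<le> ereal (t n)) sequentially" "u \<longlonglongrightarrow> l" "t \<longlonglongrightarrow> s"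
  shows "X l \<le> ereal s"
proof -
  have cl: "closed {(x, t::real). X x \<le> ereal t}" using closedX unfolding closed_efun_def .
  have "(\<lambda>n. (u n, t n)) \<longlonglongrightarrow> (l, s)" using assms(2,3) by (rule tendsto_Pair)
  from Lim_in_closed_set[OF cl _ _ this] assms(1)
  have "(l, s) \<in> {(x, t::real). X x \<le> ereal t}" by (auto elim: eventually_mono)
  then show ?thesis by simp
qed

lemma prox_exists:
  fixes x y :: 'a and c :: real
  assumes c: "c > 0"
  shows "\<exists>u. \<forall>v. ereal (qf x y c u) + X u \<le> ereal (qf x y c v) + X v"
proof -
  define \<phi> where "\<phi> v = ereal (qf x y c v) + X v" for v
  obtain v0 where v0: "X v0 \<noteq> \<infinity>" using proper unfolding proper_efun_def by auto
  define A where "A = range \<phi>"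
  obtain s where s: "\<And>n. s n \<in> A" "s \<longlonglongrightarrow> Inf A"
    using Inf_as_limit[of A] unfolding A_def by auto
  have "\<forall>n. \<exists>v. s n = \<phi> v" using s(1) unfolding A_def by auto
  then have "\<exists>u. \<forall>n. s n = \<phi> (u n)" by (rule choice)
  then obtain u where u: "\<And>n. s n = \<phi> (u n)" by blast
  define u' where "u' n = (if X (u n) \<noteq> \<infinity> then u n else v0)" for n
  have le1: "\<phi> (u' n) \<le> \<phi> (u n)" for n
    unfolding u'_def \<phi>_def by auto
  have ge1: "Inf A \<le> \<phi> (u' n)" for n
    unfolding A_def by (auto intro: INF_lower)
  have su: "s = (\<lambda>n. \<phi> (u n))" using u by auto
  have conv: "(\<lambda>n. \<phi> (u' n)) \<longlonglongrightarrow> Inf A"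
    by (rule tendsto_sandwich[where f="\<lambda>_. Inf A" and h="\<lambda>n. \<phi> (u n)"])
       (use le1 ge1 s(2) su in auto)
  have "range u' \<subseteq> edom X"
    using v0 unfolding u'_def edom_def by (auto simp: less_top)
  then have "bounded (range u')" using bddX bounded_subset by blast
  then obtain l r where r: "strict_mono r" "(u' \<circ> r) \<longlonglongrightarrow> l"
    using bounded_imp_convergent_subsequence by blast
  have conv2: "(\<lambda>n. \<phi> (u' (r n))) \<longlonglongrightarrow> Inf A"
    using LIMSEQ_subseq_LIMSEQ[OF conv r(1)] by (simp add: comp_def)
  have "\<phi> l \<le> Inf A"
  proof (rule ccontr)
    assume "\<not> \<phi> l \<le> Inf A"
    then have "Inf A < \<phi> l" by simp
    then obtain t where t: "Inf A < ereal t" "ereal t < \<phi> l"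
      using ereal_dense2 by blast
    have ev: "eventually (\<lambda>n. \<phi> (u' (r n)) < ereal t) sequentially"
      using conv2 t(1) by (rule order_tendstoD)
    have ev2: "eventually (\<lambda>n. X ((u' \<circ> r) n) \<le> ereal (t - qf x y c ((u' \<circ> r) n))) sequentially"
    proof (rule eventually_mono[OF ev])
      fix n assume "\<phi> (u' (r n)) < ereal t"
      then show "X ((u' \<circ> r) n) \<le> ereal (t - qf x y c ((u' \<circ> r) n))"
        unfolding \<phi>_def by (cases "X (u' (r n))") auto
    qed
    have "(\<lambda>n. t - qf x y c ((u' \<circ> r) n)) \<longlonglongrightarrow> t - qf x y c l"
    proof -
      have "isCont (qf x y c) l" unfolding qf_def by (intro continuous_intros)
      then have "(\<lambda>n. qf x y c ((u' \<circ> r) n)) \<longlonglongrightarrow> qf x y c l" using r(2) by (rule isCont_tendsto_compose)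
      then show ?thesis by (intro tendsto_intros)
    qed
    from lsc[OF ev2 r(2) this] have "X l \<le> ereal (t - qf x y c l)" .
    then have "\<phi> l \<le> ereal t" unfolding \<phi>_def by (cases "X l") auto
    then show False using t(2) by simp
  qed
  then have "\<forall>v. \<phi> l \<le> \<phi> v"
    unfolding A_def by (meson INF_lower UNIV_I order_trans)
  then show ?thesis unfolding \<phi>_def by blast
qed

lemma prox_unique:
  fixes x y :: 'a and c :: real
  assumes c: "c > 0"
    and u1: "\<forall>v. ereal (qf x y c u1) + X u1 \<le> ereal (qf x y c v) + X v"
    and u2: "\<forall>v. ereal (qf x y c u2) + X u2 \<le> ereal (qf x y c v) + X v"
  shows "u1 = u2"
proof -
  obtain v0 where v0: "X v0 \<noteq> \<infinity>" using proper unfolding proper_efun_def by auto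
  have f1: "X u1 \<noteq> \<infinity>" using u1[rule_format, of v0] v0 by (cases "X v0") auto
  have f2: "X u2 \<noteq> \<infinity>" using u2[rule_format, of v0] v0 by (cases "X v0") auto
  define w where "w = (1 - 1/2) *\<^sub>R u1 + (1/2::real) *\<^sub>R u2"
  have "X w \<le> ereal (1 - 1/2) * X u1 + ereal (1/2) * X u2"
    unfolding w_def by (rule convX[unfolded convex_efun_def, rule_format]) auto
  then have Xw: "X w \<le> ereal ((Xr u1 + Xr u2) / 2)"
    using X_finite[OF f1] X_finite[OF f2] by (simp add: add_divide_distrib)
  have q: "qf x y c w = (qf x y c u1 + qf x y c u2) / 2 - (norm (u1 - u2))\<^sup>2 / (8 * c)"
    unfolding w_def qf_comb by (simp add: field_simps)
  have a1: "qf x y c u1 + Xr u1 \<le> qf x y c w + (Xr u1 + Xr u2) / 2"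
  proof -
    have "ereal (qf x y c u1) + X u1 \<le> ereal (qf x y c w) + X w" using u1 by blast
    also have "\<dots> \<le> ereal (qf x y c w) + ereal ((Xr u1 + Xr u2) / 2)"
      using Xw by (intro add_left_mono)
    finally show ?thesis using X_finite[OF f1] by simp
  qed
  have a2: "qf x y c u2 + Xr u2 \<le> qf x y c w + (Xr u1 + Xr u2) / 2"
  proof -
    have "ereal (qf x y c u2) + X u2 \<le> ereal (qf x y c w) + X w" using u2 by blast
    also have "\<dots> \<le> ereal (qf x y c w) + ereal ((Xr u1 + Xr u2) / 2)"
      using Xw by (intro add_left_mono)
    finally show ?thesis using X_finite[OF f2] by simp
  qed
  define NN where "NN = (norm (u1 - u2))\<^sup>2 / (8 * c)"
  have "NN \<le> 0"
  proof -
    have "qf x y c u1 + qf x y c u2 \<le> 2 * qf x y c w" using a1 a2 unfolding add_divide_distrib by linarith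
    then show ?thesis using q unfolding NN_def[symmetric] add_divide_distrib by linarith
  qed
  then have "(norm (u1 - u2))\<^sup>2 \<le> 0" using c unfolding NN_def by (simp add: divide_le_0_iff)
  then show ?thesis by simp
qed

lemma prox_map_qf: "prox_map X x y c = (THE u. \<forall>v. ereal (qf x y c u) + X u \<le> ereal (qf x y c v) + X v)"
  unfolding prox_map_def qf_def ..

lemma prox_min:
  assumes "c > 0"
  shows "\<forall>v. ereal (qf x y c (prox_map X x y c)) + X (prox_map X x y c) \<le> ereal (qf x y c v) + X v"
  unfolding prox_map_qf
  apply (rule theI')
  using prox_exists[OF assms] prox_unique[OF assms] by blast

lemma prox_fin:
  assumes "c > 0"
  shows "X (prox_map X x y c) \<noteq> \<infinity>"
proof -
  obtain v0 where v0: "X v0 \<noteq> \<infinity>" using proper unfolding proper_efun_def by auto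
  have "ereal (qf x y c (prox_map X x y c)) + X (prox_map X x y c) \<le> ereal (qf x y c v0) + X v0"
    using prox_min[OF assms] by blast
  then show ?thesis using v0 by (cases "X v0") auto
qed

lemma prox_three_point:
  fixes x y :: 'a
  assumes c: "c > 0" and uf: "X u \<noteq> \<infinity>"
  defines "p \<equiv> prox_map X x y c"
  shows "qf x y c p + Xr p + (norm (u - p))\<^sup>2 / (2 * c) \<le> qf x y c u + Xr u"
proof -
  have pf: "X p \<noteq> \<infinity>" unfolding p_def using prox_fin[OF c] .
  have key: "qf x y c p + Xr p + (1 - t) * ((norm (u - p))\<^sup>2 / (2 * c)) \<le> qf x y c u + Xr u"
    if t: "0 < t" "t < 1" for t
  proof -
    define w where "w = (1 - t) *\<^sub>R p + t *\<^sub>R u"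
    have "X w \<le> ereal (1 - t) * X p + ereal t * X u"
      using convX t unfolding convex_efun_def w_def by auto
    then have Xw: "X w \<le> ereal ((1 - t) * Xr p + t * Xr u)"
      using X_finite[OF pf] X_finite[OF uf] by simp
    have "ereal (qf x y c p) + X p \<le> ereal (qf x y c w) + X w"
      using prox_min[OF c] unfolding p_def by blast
    also have "\<dots> \<le> ereal (qf x y c w) + ereal ((1 - t) * Xr p + t * Xr u)"
      using Xw by (intro add_left_mono)
    finally have "qf x y c p + Xr p \<le> qf x y c w + ((1 - t) * Xr p + t * Xr u)"
      using X_finite[OF pf] by simp
    moreover have "qf x y c w = (1 - t) * qf x y c p + t * qf x y c u - t * (1 - t) * (norm (p - u))\<^sup>2 / (2 * c)"
      unfolding w_def by (rule qf_comb)
    moreover have "norm (p - u) = norm (u - p)" by (rule norm_minus_commute)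
    ultimately have "t * (qf x y c p + Xr p + (1 - t) * ((norm (u - p))\<^sup>2 / (2 * c))) \<le> t * (qf x y c u + Xr u)"
      by (simp add: algebra_simps)
    then show ?thesis using t by simp
  qed
  show ?thesis
  proof (rule ccontr)
    assume nt: "\<not> ?thesis"
    define K where "K = (norm (u - p))\<^sup>2 / (2 * c)"
    define g where "g = qf x y c p + Xr p + K - (qf x y c u + Xr u)"
    have g: "g > 0" using nt unfolding g_def K_def by simp
    have K: "K \<ge> 0" unfolding K_def using c by simp
    have "qf x y c p + Xr p + (1/2) * K \<le> qf x y c u + Xr u"
      using key[of "1/2"] unfolding K_def by simp
    then have "K > 0" using g unfolding g_def by linarith
    define t where "t = min (1/2) (g / (2 * K))"
    have t: "0 < t" "t < 1" using g \<open>K > 0\<close> unfolding t_def by auto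
    have "t \<le> g / (2 * K)" unfolding t_def by simp
    then have "t * K \<le> g / (2 * K) * K" using \<open>K > 0\<close> by (intro mult_right_mono) auto
    also have "\<dots> = g / 2" using \<open>K > 0\<close> by (simp add: field_simps)
    finally have "t * K \<le> g / 2" .
    have k: "qf x y c p + Xr p + (1 - t) * K \<le> qf x y c u + Xr u" using key[OF t] unfolding K_def .
    have "(1 - t) * K = K - t * K" by (simp add: algebra_simps)
    then show False using k g \<open>t * K \<le> g / 2\<close> g_def by linarith
  qed
qed


lemma prox_diff_ident:
  fixes x1 x2 y1 y2 p1 p2 :: 'a
  assumes c: "c > 0"
  shows "qf x1 y1 c p2 - qf x1 y1 c p1 + (qf x2 y2 c p1 - qf x2 y2 c p2)
       = inner (p1 - p2) ((x1 - x2) - c *\<^sub>R (y1 - y2)) / c"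
proof -
  have "(norm (p2 - x1))\<^sup>2 - (norm (p1 - x1))\<^sup>2 + ((norm (p1 - x2))\<^sup>2 - (norm (p2 - x2))\<^sup>2)
      = 2 * inner (p1 - p2) (x1 - x2)"
    unfolding power2_norm_eq_inner
    by (simp add: inner_diff_left inner_diff_right inner_commute algebra_simps)
  then have e: "(1 / (2 * c)) * (norm (p2 - x1))\<^sup>2 - (1 / (2 * c)) * (norm (p1 - x1))\<^sup>2
      + ((1 / (2 * c)) * (norm (p1 - x2))\<^sup>2 - (1 / (2 * c)) * (norm (p2 - x2))\<^sup>2)
      = inner (p1 - p2) (x1 - x2) / c"
  proof -
    assume h: "(norm (p2 - x1))\<^sup>2 - (norm (p1 - x1))\<^sup>2 + ((norm (p1 - x2))\<^sup>2 - (norm (p2 - x2))\<^sup>2)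
      = 2 * inner (p1 - p2) (x1 - x2)"
    have "(1 / (2 * c)) * (norm (p2 - x1))\<^sup>2 - (1 / (2 * c)) * (norm (p1 - x1))\<^sup>2
      + ((1 / (2 * c)) * (norm (p1 - x2))\<^sup>2 - (1 / (2 * c)) * (norm (p2 - x2))\<^sup>2)
      = (1 / (2 * c)) * ((norm (p2 - x1))\<^sup>2 - (norm (p1 - x1))\<^sup>2 + ((norm (p1 - x2))\<^sup>2 - (norm (p2 - x2))\<^sup>2))"
      by (simp add: algebra_simps)
    also have "\<dots> = inner (p1 - p2) (x1 - x2) / c" unfolding h using c by simp
    finally show ?thesis .
  qed
  have "inner y1 p2 - inner y1 p1 + (inner y2 p1 - inner y2 p2) = - inner (p1 - p2) (y1 - y2)"
    by (simp add: inner_diff_left inner_diff_right inner_commute algebra_simps)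
  moreover have "inner (p1 - p2) ((x1 - x2) - c *\<^sub>R (y1 - y2)) / c
     = inner (p1 - p2) (x1 - x2) / c - inner (p1 - p2) (y1 - y2)"
    using c by (simp add: inner_diff_right inner_add_right field_simps)
  ultimately show ?thesis using e unfolding qf_def by linarith
qed

lemma prox_lip:
  fixes x1 x2 y1 y2 :: 'a
  assumes c: "c > 0"
  shows "norm (prox_map X x1 y1 c - prox_map X x2 y2 c) \<le> norm (x1 - x2) + c * norm (y1 - y2)"
proof -
  define p1 where "p1 = prox_map X x1 y1 c"
  define p2 where "p2 = prox_map X x2 y2 c"
  have f1: "X p1 \<noteq> \<infinity>" unfolding p1_def by (rule prox_fin[OF c])
  have f2: "X p2 \<noteq> \<infinity>" unfolding p2_def by (rule prox_fin[OF c])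
  have t1: "qf x1 y1 c p1 + Xr p1 + (norm (p2 - p1))\<^sup>2 / (2 * c) \<le> qf x1 y1 c p2 + Xr p2"
    unfolding p1_def using prox_three_point[OF c f2] unfolding p1_def .
  have t2: "qf x2 y2 c p2 + Xr p2 + (norm (p1 - p2))\<^sup>2 / (2 * c) \<le> qf x2 y2 c p1 + Xr p1"
    unfolding p2_def using prox_three_point[OF c f1] unfolding p2_def .
  define v where "v = (x1 - x2) - c *\<^sub>R (y1 - y2)"
  have nc: "norm (p2 - p1) = norm (p1 - p2)" by (rule norm_minus_commute)
  have "(norm (p1 - p2))\<^sup>2 / c \<le> inner (p1 - p2) v / c"
    using t1 t2 prox_diff_ident[OF c, of x1 y1 p2 p1 x2 y2] nc unfolding v_def
    by (simp add: field_simps)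
  then have "(norm (p1 - p2))\<^sup>2 \<le> inner (p1 - p2) v"
    using c by (simp add: divide_right_mono_neg divide_le_cancel)
  also have "\<dots> \<le> norm (p1 - p2) * norm v" by (rule norm_cauchy_schwarz)
  finally have "norm (p1 - p2) \<le> norm v"
    by (metis mult_le_cancel_left norm_ge_zero not_le power2_eq_square zero_less_norm_iff dual_order.trans order_refl)
  also have "norm v \<le> norm (x1 - x2) + norm (c *\<^sub>R (y1 - y2))"
    unfolding v_def by (rule norm_triangle_ineq4)
  finally show ?thesis using c unfolding p1_def p2_def by simp
qed

lemma prox_cont:
  assumes c: "c > 0"
  shows "continuous_on UNIV (\<lambda>z. prox_map X (fst z) (snd z) c)"
proof -
  have "isCont (\<lambda>z. prox_map X (fst z) (snd z) c) z0" for z0 :: "'a \<times> 'a"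
  proof -
    have lim: "((\<lambda>z. norm (fst z - fst z0) + c * norm (snd z - snd z0)) \<longlongrightarrow> 0) (at z0)"
      by (rule tendsto_eq_intros refl | simp)+
    have "((\<lambda>z. prox_map X (fst z) (snd z) c - prox_map X (fst z0) (snd z0) c) \<longlongrightarrow> 0) (at z0)"
      by (rule Lim_null_comparison[OF _ lim]) (simp add: prox_lip[OF c])
    then show ?thesis unfolding isCont_def by (rule LIM_zero_cancel)
  qed
  then show ?thesis by (simp add: continuous_at_imp_continuous_on)
qed

lemma grad_map_diff:
  assumes c: "c > 0"
  shows "norm (grad_map X x y1 c - grad_map X x y2 c) \<le> norm (y1 - y2)"
proof -
  have "grad_map X x y1 c - grad_map X x y2 c = (1 / c) *\<^sub>R (prox_map X x y2 c - prox_map X x y1 c)"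
    unfolding grad_map_def by (simp add: algebra_simps)
  then have "norm (grad_map X x y1 c - grad_map X x y2 c) = norm (prox_map X x y2 c - prox_map X x y1 c) / c"
    using c by simp
  also have "\<dots> \<le> (norm (x - x) + c * norm (y2 - y1)) / c"
    using prox_lip[OF c, of x y2 x y1] c by (intro divide_right_mono) auto
  also have "\<dots> = norm (y1 - y2)" using c by (simp add: norm_minus_commute)
  finally show ?thesis .
qed

end


lemma gderiv_line:
  fixes f :: "'a::real_inner \<Rightarrow> real"
  assumes "\<And>z. GDERIV f z :> g z"
  shows "((\<lambda>t. f (x + t *\<^sub>R d)) has_real_derivative inner d (g (x + t *\<^sub>R d))) (at t)"
proof -
  have l: "((\<lambda>t. x + t *\<^sub>R d) has_derivative (\<lambda>s. s *\<^sub>R d)) (at t)"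
    by (auto intro!: derivative_eq_intros)
  have "(f has_derivative (\<lambda>h. inner h (g (x + t *\<^sub>R d)))) (at (x + t *\<^sub>R d))"
    using assms[of "x + t *\<^sub>R d"] unfolding gderiv_def .
  from has_derivative_compose[OF l this]
  have "((\<lambda>t. f (x + t *\<^sub>R d)) has_derivative (\<lambda>s. inner (s *\<^sub>R d) (g (x + t *\<^sub>R d)))) (at t)" .
  moreover have "(\<lambda>s. inner (s *\<^sub>R d) (g (x + t *\<^sub>R d))) = (*) (inner d (g (x + t *\<^sub>R d)))"
    by (auto simp: fun_eq_iff)
  ultimately show ?thesis unfolding has_field_derivative_def by simp
qed

lemma smooth_upper:
  fixes f :: "'a::real_inner \<Rightarrow> real"
  assumes gd: "\<And>z. GDERIV f z :> g z" and lip: "L-lipschitz_on UNIV g"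
  shows "f y \<le> f x + inner (g x) (y - x) + L / 2 * (norm (y - x))\<^sup>2"
proof -
  define d where "d = y - x"
  define \<psi> where "\<psi> t = f (x + t *\<^sub>R d) - t * inner (g x) d - L / 2 * t\<^sup>2 * (norm d)\<^sup>2" for t
  have "\<psi> 1 \<le> \<psi> 0"
  proof (rule DERIV_nonpos_imp_nonincreasing[of 0 1 \<psi>])
    fix t :: real assume t: "0 \<le> t" "t \<le> 1"
    have D: "(\<psi> has_real_derivative (inner d (g (x + t *\<^sub>R d)) - inner (g x) d - L * t * (norm d)\<^sup>2)) (at t)"
      unfolding \<psi>_def
      by (rule derivative_eq_intros gderiv_line[OF gd] refl | simp)+
    have "inner d (g (x + t *\<^sub>R d)) - inner (g x) d = inner d (g (x + t *\<^sub>R d) - g x)"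
      by (simp add: inner_diff_right inner_commute)
    also have "\<dots> \<le> norm d * norm (g (x + t *\<^sub>R d) - g x)"
      by (rule norm_cauchy_schwarz)
    also have "norm (g (x + t *\<^sub>R d) - g x) \<le> L * (t * norm d)"
      using lipschitz_on_normD[OF lip, of "x + t *\<^sub>R d" x] t by simp
    then have "norm d * norm (g (x + t *\<^sub>R d) - g x) \<le> norm d * (L * (t * norm d))"
      using t by (intro mult_left_mono) auto
    finally have "inner d (g (x + t *\<^sub>R d)) - inner (g x) d - L * t * (norm d)\<^sup>2 \<le> 0"
      by (simp add: power2_eq_square algebra_simps)
    with D show "\<exists>y. (\<psi> has_real_derivative y) (at t) \<and> y \<le> 0" by blast
  qed simp
  then show ?thesis unfolding \<psi>_def d_def by (simp add: inner_commute)
qed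

lemma smooth_lower:
  fixes f :: "'a::real_inner \<Rightarrow> real"
  assumes gd: "\<And>z. GDERIV f z :> g z" and lip: "L-lipschitz_on UNIV g"
  shows "f x + inner (g x) (y - x) - L / 2 * (norm (y - x))\<^sup>2 \<le> f y"
proof -
  define d where "d = y - x"
  define \<psi> where "\<psi> t = f (x + t *\<^sub>R d) - t * inner (g x) d + L / 2 * t\<^sup>2 * (norm d)\<^sup>2" for t
  have "\<psi> 0 \<le> \<psi> 1"
  proof (rule DERIV_nonneg_imp_nondecreasing[of 0 1 \<psi>])
    fix t :: real assume t: "0 \<le> t" "t \<le> 1"
    have D: "(\<psi> has_real_derivative (inner d (g (x + t *\<^sub>R d)) - inner (g x) d + L * t * (norm d)\<^sup>2)) (at t)"
      unfolding \<psi>_def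
      by (rule derivative_eq_intros gderiv_line[OF gd] refl | simp)+
    have "inner d (g (x + t *\<^sub>R d)) - inner (g x) d = inner d (g (x + t *\<^sub>R d) - g x)"
      by (simp add: inner_diff_right inner_commute)
    also have "\<dots> \<ge> - (norm d * norm (g (x + t *\<^sub>R d) - g x))"
      using norm_cauchy_schwarz[of "-d" "g (x + t *\<^sub>R d) - g x"] by simp
    finally have 1: "inner d (g (x + t *\<^sub>R d)) - inner (g x) d \<ge> - (norm d * norm (g (x + t *\<^sub>R d) - g x))" .
    have "norm (g (x + t *\<^sub>R d) - g x) \<le> L * (t * norm d)"
      using lipschitz_on_normD[OF lip, of "x + t *\<^sub>R d" x] t by simp
    then have "norm d * norm (g (x + t *\<^sub>R d) - g x) \<le> norm d * (L * (t * norm d))"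
      using t by (intro mult_left_mono) auto
    with 1 have "inner d (g (x + t *\<^sub>R d)) - inner (g x) d + L * t * (norm d)\<^sup>2 \<ge> 0"
      by (simp add: power2_eq_square algebra_simps)
    with D show "\<exists>y. (\<psi> has_real_derivative y) (at t) \<and> y \<ge> 0" by blast
  qed simp
  then show ?thesis unfolding \<psi>_def d_def by (simp add: inner_commute)
qed

lemma convex_tangent:
  fixes h :: "'a::real_inner \<Rightarrow> real"
  assumes cv: "convex_on UNIV h" and gd: "\<And>z. GDERIV h z :> g z"
  shows "h x + inner (g x) (y - x) \<le> h y"
proof -
  define d where "d = y - x"
  define \<phi> where "\<phi> t = h (x + t *\<^sub>R d)" for t
  have cphi: "convex_on UNIV \<phi>"
  proof (rule convex_onI)
    fix t a b :: real assume t: "0 < t" "t < 1"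
    have "x + ((1 - t) *\<^sub>R a + t *\<^sub>R b) *\<^sub>R d = (1 - t) *\<^sub>R (x + a *\<^sub>R d) + t *\<^sub>R (x + b *\<^sub>R d)"
      by (simp add: algebra_simps)
    then show "\<phi> ((1 - t) *\<^sub>R a + t *\<^sub>R b) \<le> (1 - t) * \<phi> a + t * \<phi> b"
      unfolding \<phi>_def using convex_onD[OF cv, of t "x + a *\<^sub>R d" "x + b *\<^sub>R d"] t by simp
  qed simp
  have "(\<phi> has_real_derivative inner d (g (x + 0 *\<^sub>R d))) (at 0 within UNIV)"
    unfolding \<phi>_def using gderiv_line[OF gd, of x d 0] by simp
  from convex_on_imp_above_tangent[OF cphi _ _ _ this, of 1]
  have "\<phi> 1 - \<phi> 0 \<ge> inner d (g x) * (1 - 0)" by simp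
  then show ?thesis unfolding \<phi>_def d_def by (simp add: inner_commute)
qed


locale rsag = proxX X for X :: "'a::euclidean_space \<Rightarrow> ereal" +
  fixes f h :: "'a \<Rightarrow> real" and gf gh :: "'a \<Rightarrow> 'a" and Lf Lh M :: real
  assumes f_grad: "\<And>x. GDERIV f x :> gf x"
    and f_lip: "Lf-lipschitz_on UNIV gf"
    and h_convex: "convex_on UNIV h"
    and h_grad: "\<And>x. GDERIV h x :> gh x"
    and h_lip: "Lh-lipschitz_on UNIV gh"
    and L_pos: "Lf + Lh > 0"
    and P_bdd: "\<And>x y c. c > 0 \<Longrightarrow> norm (prox_map X x y c) \<le> M"
begin

abbreviation "L \<equiv> Lf + Lh"
definition Psi where "Psi x = f x + h x"
definition g where "g x = gf x + gh x"
definition bt where "bt = 1 / (2 * L)"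

lemma Lf_nonneg: "Lf \<ge> 0" using f_lip lipschitz_on_nonneg by blast
lemma Lh_nonneg: "Lh \<ge> 0" using h_lip lipschitz_on_nonneg by blast
lemma bt_pos: "bt > 0" unfolding bt_def using L_pos by simp

lemma psi_upper: "Psi y \<le> Psi x + inner (g x) (y - x) + L / 2 * (norm (y - x))\<^sup>2"
proof -
  have e: "Psi y - Psi x - inner (g x) (y - x) = (f y - f x - inner (gf x) (y - x)) + (h y - h x - inner (gh x) (y - x))"
    unfolding Psi_def g_def by (simp add: inner_add_left)
  have e2: "L / 2 * (norm (y - x))\<^sup>2 = Lf / 2 * (norm (y - x))\<^sup>2 + Lh / 2 * (norm (y - x))\<^sup>2"
    by (simp add: algebra_simps add_divide_distrib)
  show ?thesis
    using smooth_upper[OF f_grad f_lip, of y x] smooth_upper[OF h_grad h_lip, of y x] e e2 by linarith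
qed

lemma psi_lower: "Psi x + inner (g x) (z - x) \<le> Psi z + Lf / 2 * (norm (z - x))\<^sup>2"
  using smooth_lower[OF f_grad f_lip, of x z] convex_tangent[OF h_convex h_grad, of x z]
  unfolding Psi_def g_def by (simp add: inner_add_left algebra_simps)

lemma young: "- inner v d \<le> L / 8 * (norm d)\<^sup>2 + 2 / L * (norm v)\<^sup>2"
proof -
  have "- inner v d \<le> norm v * norm d"
    using norm_cauchy_schwarz[of "-v" d] by simp
  also have "\<dots> \<le> L / 8 * (norm d)\<^sup>2 + 2 / L * (norm v)\<^sup>2"
  proof -
    have "0 \<le> (L / 4 * norm d - norm v)\<^sup>2 * (2 / L)" using L_pos by simp
    also have "\<dots> = L / 8 * (norm d)\<^sup>2 + 2 / L * (norm v)\<^sup>2 - norm v * norm d"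
      using L_pos by (simp add: power2_eq_square field_simps)
    finally show ?thesis by simp
  qed
  finally show ?thesis .
qed

lemma step:
  fixes a xp G z :: 'a and \<alpha> lm :: real
  assumes al: "0 < \<alpha>" "\<alpha> \<le> 1" and lam: "lm > 0" and al_lam: "\<alpha> * lm \<le> bt"
    and zf: "X z \<noteq> \<infinity>" and af: "\<alpha> < 1 \<Longrightarrow> X a \<noteq> \<infinity>"
  defines "m \<equiv> (1 - \<alpha>) *\<^sub>R a + \<alpha> *\<^sub>R xp"
  defines "xn \<equiv> prox_map X xp G lm"
  defines "an \<equiv> prox_map X m G bt"
  defines "\<delta> \<equiv> G - g m"
  shows "Psi an + Xr an - (Psi z + Xr z) \<le> (1 - \<alpha>) * (Psi a + Xr a - (Psi z + Xr z))
     + \<alpha> / (2 * lm) * ((norm (z - xp))\<^sup>2 - (norm (z - xn))\<^sup>2)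
     + Lf / 2 * ((1 - \<alpha>) * (norm (a - m))\<^sup>2 + \<alpha> * (norm (z - m))\<^sup>2)
     - 3 * L / 8 * (norm (an - m))\<^sup>2 + 2 / L * (norm \<delta>)\<^sup>2 + \<alpha> * inner \<delta> (z - xp)"
proof -
  define u where "u = (1 - \<alpha>) *\<^sub>R a + \<alpha> *\<^sub>R xn"
  define d where "d = an - m"
  have btL: "1 / (2 * bt) = L" unfolding bt_def using L_pos by simp
  have xnf: "X xn \<noteq> \<infinity>" unfolding xn_def using prox_fin[OF lam] .
  have anf: "X an \<noteq> \<infinity>" unfolding an_def using prox_fin[OF bt_pos] .
  have S7: "Xr u \<le> \<alpha> * Xr xn + Xr a - \<alpha> * Xr a"
  proof (cases "\<alpha> = 1")
    case True then show ?thesis unfolding u_def by simp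
  next
    case False
    then have a1: "\<alpha> < 1" using al by simp
    have "X u \<le> ereal (1 - \<alpha>) * X a + ereal \<alpha> * X xn"
      unfolding u_def by (rule convX[unfolded convex_efun_def, rule_format]) (use al a1 in auto)
    also have "\<dots> = ereal ((1 - \<alpha>) * Xr a + \<alpha> * Xr xn)"
      using X_finite[OF af[OF a1]] X_finite[OF xnf] by simp
    finally have "X u \<le> ereal ((1 - \<alpha>) * Xr a + \<alpha> * Xr xn)" .
    moreover have "X u \<noteq> \<infinity>" using calculation by auto
    ultimately show ?thesis using X_finite[of u] by (simp add: algebra_simps)
  qed
  have uf: "X u \<noteq> \<infinity>"
  proof (cases "\<alpha> = 1")
    case True then show ?thesis unfolding u_def using xnf by simp
  next
    case False
    then have a1: "\<alpha> < 1" using al by simp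
    have "X u \<le> ereal (1 - \<alpha>) * X a + ereal \<alpha> * X xn"
      unfolding u_def by (rule convX[unfolded convex_efun_def, rule_format]) (use al a1 in auto)
    also have "\<dots> = ereal ((1 - \<alpha>) * Xr a + \<alpha> * Xr xn)"
      using X_finite[OF af[OF a1]] X_finite[OF xnf] by simp
    finally show ?thesis by auto
  qed
  have I1: "Psi an \<le> Psi m + inner (g m) d + L / 2 * (norm d)\<^sup>2"
    unfolding d_def by (rule psi_upper)
  have I2: "inner G an + L * (norm d)\<^sup>2 + Xr an \<le> inner G u + L * (norm (u - m))\<^sup>2 + Xr u"
  proof -
    have "qf m G bt an + Xr an + (norm (u - an))\<^sup>2 / (2 * bt) \<le> qf m G bt u + Xr u"
      unfolding an_def by (rule prox_three_point[OF bt_pos uf])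
    moreover have "(norm (u - an))\<^sup>2 / (2 * bt) \<ge> 0" using bt_pos by simp
    ultimately have "qf m G bt an + Xr an \<le> qf m G bt u + Xr u" by linarith
    then show ?thesis unfolding qf_def btL d_def by simp
  qed
  have I7: "- inner \<delta> d \<le> L / 8 * (norm d)\<^sup>2 + 2 / L * (norm \<delta>)\<^sup>2" by (rule young)
  have e1: "inner \<delta> d = inner G an - inner G m - inner (g m) d"
    unfolding \<delta>_def d_def by (simp add: inner_diff_left inner_diff_right)
  have S1: "Psi an + Xr an \<le> Psi m + (inner G u - inner G m) + Xr u + L * (norm (u - m))\<^sup>2
      - 3 * L / 8 * (norm d)\<^sup>2 + 2 / L * (norm \<delta>)\<^sup>2"
    using I1 I2 I7 e1 by linarith
  have S2: "inner G u - inner G m = \<alpha> * inner G (xn - m) + inner G (a - m) - \<alpha> * inner G (a - m)"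
  proof -
    have "u - m = \<alpha> *\<^sub>R (xn - m) + (1 - \<alpha>) *\<^sub>R (a - m)"
      unfolding u_def m_def by (simp add: algebra_simps)
    then have "inner G (u - m) = \<alpha> * inner G (xn - m) + (1 - \<alpha>) * inner G (a - m)"
      by (simp add: inner_add_right)
    then show ?thesis by (simp add: inner_diff_right algebra_simps)
  qed
  define cl where "cl = 1 / (2 * lm)"
  have I4: "inner G (xn - m) + Xr xn \<le> inner G (z - m) + Xr z
      + cl * (norm (z - xp))\<^sup>2 - cl * (norm (z - xn))\<^sup>2 - cl * (norm (xn - xp))\<^sup>2"
  proof -
    have "qf xp G lm xn + Xr xn + (norm (z - xn))\<^sup>2 / (2 * lm) \<le> qf xp G lm z + Xr z"
      unfolding xn_def by (rule prox_three_point[OF lam zf])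
    then show ?thesis unfolding qf_def cl_def by (simp add: inner_diff_right)
  qed
  have S3: "\<alpha> * inner G (xn - m) + \<alpha> * Xr xn \<le> \<alpha> * inner G (z - m) + \<alpha> * Xr z
      + \<alpha> * cl * (norm (z - xp))\<^sup>2 - \<alpha> * cl * (norm (z - xn))\<^sup>2 - \<alpha> * cl * (norm (xn - xp))\<^sup>2"
    using mult_left_mono[OF I4, of \<alpha>] al by (simp add: algebra_simps)
  have S6: "L * (norm (u - m))\<^sup>2 \<le> \<alpha> * cl * (norm (xn - xp))\<^sup>2"
  proof -
    have "u - m = \<alpha> *\<^sub>R (xn - xp)" unfolding u_def m_def by (simp add: algebra_simps)
    then have "(norm (u - m))\<^sup>2 = \<alpha>\<^sup>2 * (norm (xn - xp))\<^sup>2" by (simp add: power_mult_distrib)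
    moreover have "L * \<alpha>\<^sup>2 \<le> \<alpha> * cl"
    proof -
      have "\<alpha> * (2 * L * (\<alpha> * lm)) \<le> \<alpha> * (2 * L * bt)"
        using al al_lam L_pos by (intro mult_left_mono) auto
      also have "2 * L * bt = 1" unfolding bt_def using L_pos by simp
      finally have "\<alpha> * (2 * L * (\<alpha> * lm)) \<le> \<alpha>" by simp
      then have "L * \<alpha>\<^sup>2 * (2 * lm) \<le> \<alpha>" by (simp add: power2_eq_square algebra_simps)
      then show ?thesis unfolding cl_def using lam by (simp add: field_simps)
    qed
    ultimately show ?thesis
      by (metis mult.assoc mult_right_mono zero_le_power2)
  qed
  have I5: "Psi m + inner (g m) (a - m) \<le> Psi a + Lf / 2 * (norm (a - m))\<^sup>2" by (rule psi_lower)
  have I6: "Psi m + inner (g m) (z - m) \<le> Psi z + Lf / 2 * (norm (z - m))\<^sup>2" by (rule psi_lower)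
  have S4a: "(1 - \<alpha>) * (Psi m + inner (g m) (a - m)) \<le> (1 - \<alpha>) * (Psi a + Lf / 2 * (norm (a - m))\<^sup>2)"
    using mult_left_mono[OF I5, of "1 - \<alpha>"] al by simp
  have S4b: "\<alpha> * (Psi m + inner (g m) (z - m)) \<le> \<alpha> * (Psi z + Lf / 2 * (norm (z - m))\<^sup>2)"
    using mult_left_mono[OF I6, of \<alpha>] al by simp
  have S5: "\<alpha> * inner \<delta> (z - m) + (1 - \<alpha>) * inner \<delta> (a - m) = \<alpha> * inner \<delta> (z - xp)"
  proof -
    have "\<alpha> *\<^sub>R (z - m) + (1 - \<alpha>) *\<^sub>R (a - m) = \<alpha> *\<^sub>R (z - xp)"
      unfolding m_def by (simp add: algebra_simps)
    then have "inner \<delta> (\<alpha> *\<^sub>R (z - m) + (1 - \<alpha>) *\<^sub>R (a - m)) = inner \<delta> (\<alpha> *\<^sub>R (z - xp))" by simp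
    then show ?thesis by (simp add: inner_add_right)
  qed
  have gz: "inner G (z - m) = inner (g m) (z - m) + inner \<delta> (z - m)"
    unfolding \<delta>_def by (simp add: inner_diff_left)
  have ga: "inner G (a - m) = inner (g m) (a - m) + inner \<delta> (a - m)"
    unfolding \<delta>_def by (simp add: inner_diff_left)
  have F1: "\<alpha> * inner G (z - m) = \<alpha> * inner (g m) (z - m) + \<alpha> * inner \<delta> (z - m)"
    using gz by (simp add: distrib_left)
  have F2: "inner G (a - m) - \<alpha> * inner G (a - m) = inner (g m) (a - m) - \<alpha> * inner (g m) (a - m)
      + (inner \<delta> (a - m) - \<alpha> * inner \<delta> (a - m))"
    unfolding ga by (simp add: algebra_simps)
  have F4a: "Psi m - \<alpha> * Psi m + (inner (g m) (a - m) - \<alpha> * inner (g m) (a - m))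
      \<le> Psi a - \<alpha> * Psi a + (Lf / 2 * (norm (a - m))\<^sup>2 - \<alpha> * (Lf / 2 * (norm (a - m))\<^sup>2))"
    using S4a by (simp add: algebra_simps diff_divide_distrib add_divide_distrib)
  have F4b: "\<alpha> * Psi m + \<alpha> * inner (g m) (z - m) \<le> \<alpha> * Psi z + \<alpha> * (Lf / 2 * (norm (z - m))\<^sup>2)"
    using S4b by (simp add: distrib_left)
  have F5: "\<alpha> * inner \<delta> (z - m) + (inner \<delta> (a - m) - \<alpha> * inner \<delta> (a - m)) = \<alpha> * inner \<delta> (z - xp)"
    using S5 by (simp add: algebra_simps)
  have GG: "(1 - \<alpha>) * (Psi a + Xr a - (Psi z + Xr z))
     + \<alpha> / (2 * lm) * ((norm (z - xp))\<^sup>2 - (norm (z - xn))\<^sup>2)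
     + Lf / 2 * ((1 - \<alpha>) * (norm (a - m))\<^sup>2 + \<alpha> * (norm (z - m))\<^sup>2)
     - 3 * L / 8 * (norm \<delta>')\<^sup>2 + 2 / L * (norm \<delta>)\<^sup>2 + \<alpha> * inner \<delta> (z - xp)
     = Psi a + Xr a - (Psi z + Xr z) - \<alpha> * Psi a - \<alpha> * Xr a + \<alpha> * Psi z + \<alpha> * Xr z
       + (\<alpha> * cl * (norm (z - xp))\<^sup>2 - \<alpha> * cl * (norm (z - xn))\<^sup>2)
       + (Lf / 2 * (norm (a - m))\<^sup>2 - \<alpha> * (Lf / 2 * (norm (a - m))\<^sup>2)) + \<alpha> * (Lf / 2 * (norm (z - m))\<^sup>2)
       - 3 * L / 8 * (norm \<delta>')\<^sup>2 + 2 / L * (norm \<delta>)\<^sup>2 + \<alpha> * inner \<delta> (z - xp)" for \<delta>'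
    unfolding cl_def by (simp add: algebra_simps)
  show ?thesis
    unfolding GG d_def[symmetric]
    using S1 S2 S3 S6 S7 F1 F2 F4a F4b F5 by linarith
qed

end


locale rsag2 = rsag X f h gf gh Lf Lh M for X :: "'a::euclidean_space \<Rightarrow> ereal" and f h gf gh Lf Lh M +
  fixes Gor :: "'a \<Rightarrow> 'b \<Rightarrow> 'a" and \<sigma> Dt :: real and x0 z :: 'a
  assumes z_opt: "\<And>x. ereal (f z + h z) + X z \<le> ereal (f x + h x) + X x"
begin

definition "st \<omega> n = rsag_state X Gor L \<sigma> Dt x0 \<omega> n"
definition "xk \<omega> n = fst (st \<omega> n)"
definition "xa \<omega> n = snd (st \<omega> n)"
definition "xmd \<omega> k = rsag_xmd X Gor L \<sigma> Dt x0 \<omega> k"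
definition "mb k = rsag_batch \<sigma> L Dt k"
definition "Gb \<omega> k = (1 / real (mb k)) *\<^sub>R (\<Sum>i = 1..mb k. Gor (xmd \<omega> k) (\<omega> (k, i)))"
definition "al k = rsag_alpha k"
definition "lmb k = rsag_lambda L k"
definition "dl \<omega> k = Gb \<omega> k - g (xmd \<omega> k)"
definition "TT k = real k * (real k + 1) / 2"
definition "EE \<omega> n = Psi (xa \<omega> n) + Xr (xa \<omega> n) - (Psi z + Xr z)"
definition "AA \<omega> k = (1 - al k) * (norm (xa \<omega> (k - 1) - xmd \<omega> k))\<^sup>2 + al k * (norm (z - xmd \<omega> k))\<^sup>2"
definition "RR \<omega> k = Lf / 2 * AA \<omega> k + 2 / L * (norm (dl \<omega> k))\<^sup>2 + al k * inner (dl \<omega> k) (z - xk \<omega> (k - 1))"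

lemma beta_eq: "rsag_beta L k = bt" unfolding rsag_beta_def bt_def ..

lemma lmb_eq: "lmb k = real k * bt / 2" unfolding lmb_def rsag_lambda_def beta_eq ..

lemma st0: "xk \<omega> 0 = x0" "xa \<omega> 0 = x0"
  unfolding xk_def xa_def st_def by simp_all

lemma xmd_eq: "xmd \<omega> k = (1 - al k) *\<^sub>R xa \<omega> (k - 1) + al k *\<^sub>R xk \<omega> (k - 1)"
  unfolding xmd_def rsag_xmd_def xa_def xk_def st_def al_def by (simp add: case_prod_beta Let_def)

lemma st_Suc: "xk \<omega> (Suc n) = prox_map X (xk \<omega> n) (Gb \<omega> (Suc n)) (lmb (Suc n))"
   "xa \<omega> (Suc n) = prox_map X (xmd \<omega> (Suc n)) (Gb \<omega> (Suc n)) bt"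
  unfolding xk_def xa_def st_def Gb_def xmd_def lmb_def mb_def rsag_xmd_def
  by (simp_all add: case_prod_beta Let_def beta_eq)

lemma al_1: "al 1 = 1" unfolding al_def rsag_alpha_def by simp

lemma al_pos: "k \<ge> 1 \<Longrightarrow> 0 < al k \<and> al k \<le> 1"
  unfolding al_def rsag_alpha_def by (auto simp: field_simps)

lemma al_lt1: "k \<ge> 2 \<Longrightarrow> al k < 1"
  unfolding al_def rsag_alpha_def by (auto simp: field_simps)

lemma lmb_pos: "k \<ge> 1 \<Longrightarrow> lmb k > 0"
  unfolding lmb_eq using bt_pos by simp

lemma al_lmb: "k \<ge> 1 \<Longrightarrow> al k * lmb k \<le> bt"
  unfolding lmb_eq al_def rsag_alpha_def using bt_pos by (auto simp: field_simps)

lemma xk_bdd: "n \<ge> 1 \<Longrightarrow> norm (xk \<omega> n) \<le> M"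
  by (cases n) (auto simp: st_Suc intro!: P_bdd lmb_pos)

lemma xa_bdd: "n \<ge> 1 \<Longrightarrow> norm (xa \<omega> n) \<le> M"
  by (cases n) (auto simp: st_Suc intro!: P_bdd bt_pos)

lemma M_nonneg: "M \<ge> 0"
  using P_bdd[OF bt_pos] norm_ge_zero order_trans by blast

lemma xa_fin: "n \<ge> 1 \<Longrightarrow> X (xa \<omega> n) \<noteq> \<infinity>"
  by (cases n) (auto simp: st_Suc intro!: prox_fin bt_pos)

lemma xmd_1: "xmd \<omega> 1 = x0"
  unfolding xmd_eq al_1 by (simp add: st0)

lemma xmd_bdd: "k \<ge> 2 \<Longrightarrow> norm (xmd \<omega> k) \<le> M"
proof -
  assume k: "k \<ge> 2"
  have a: "0 < al k" "al k \<le> 1" using al_pos[of k] k by auto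
  have "norm (xmd \<omega> k) \<le> norm ((1 - al k) *\<^sub>R xa \<omega> (k - 1)) + norm (al k *\<^sub>R xk \<omega> (k - 1))"
    unfolding xmd_eq by (rule norm_triangle_ineq)
  also have "\<dots> = (1 - al k) * norm (xa \<omega> (k - 1)) + al k * norm (xk \<omega> (k - 1))"
    using a by simp
  also have "\<dots> \<le> (1 - al k) * M + al k * M"
    using a k xa_bdd[of "k - 1" \<omega>] xk_bdd[of "k - 1" \<omega>]
    by (intro add_mono mult_left_mono) auto
  finally show ?thesis by (simp add: algebra_simps)
qed

lemma z_fin: "X z \<noteq> \<infinity>"
proof -
  obtain v0 where v0: "X v0 \<noteq> \<infinity>" using proper unfolding proper_efun_def by auto
  show ?thesis using z_opt[of v0] v0 by (cases "X v0") auto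
qed

lemma EE_nonneg: "n \<ge> 1 \<Longrightarrow> EE \<omega> n \<ge> 0"
proof -
  assume n: "n \<ge> 1"
  have "ereal (Psi z) + X z \<le> ereal (Psi (xa \<omega> n)) + X (xa \<omega> n)"
    using z_opt unfolding Psi_def by blast
  then show ?thesis unfolding EE_def
    using X_finite[OF z_fin] X_finite[OF xa_fin[OF n]] by simp
qed

lemma step_k:
  assumes k: "k \<ge> 1"
  shows "EE \<omega> k \<le> (1 - al k) * EE \<omega> (k - 1)
     + al k / (2 * lmb k) * ((norm (z - xk \<omega> (k - 1)))\<^sup>2 - (norm (z - xk \<omega> k))\<^sup>2)
     + RR \<omega> k - 3 * L / 8 * (norm (xa \<omega> k - xmd \<omega> k))\<^sup>2"
proof -
  obtain n where n: "k = Suc n" using k by (cases k) auto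
  have "Psi (prox_map X ((1 - al k) *\<^sub>R xa \<omega> n + al k *\<^sub>R xk \<omega> n) (Gb \<omega> k) bt)
      + Xr (prox_map X ((1 - al k) *\<^sub>R xa \<omega> n + al k *\<^sub>R xk \<omega> n) (Gb \<omega> k) bt) - (Psi z + Xr z)
    \<le> (1 - al k) * (Psi (xa \<omega> n) + Xr (xa \<omega> n) - (Psi z + Xr z))
     + al k / (2 * lmb k) * ((norm (z - xk \<omega> n))\<^sup>2 - (norm (z - prox_map X (xk \<omega> n) (Gb \<omega> k) (lmb k)))\<^sup>2)
     + Lf / 2 * ((1 - al k) * (norm (xa \<omega> n - ((1 - al k) *\<^sub>R xa \<omega> n + al k *\<^sub>R xk \<omega> n)))\<^sup>2
        + al k * (norm (z - ((1 - al k) *\<^sub>R xa \<omega> n + al k *\<^sub>R xk \<omega> n)))\<^sup>2)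
     - 3 * L / 8 * (norm (prox_map X ((1 - al k) *\<^sub>R xa \<omega> n + al k *\<^sub>R xk \<omega> n) (Gb \<omega> k) bt
          - ((1 - al k) *\<^sub>R xa \<omega> n + al k *\<^sub>R xk \<omega> n)))\<^sup>2
     + 2 / L * (norm (Gb \<omega> k - g ((1 - al k) *\<^sub>R xa \<omega> n + al k *\<^sub>R xk \<omega> n)))\<^sup>2
     + al k * inner (Gb \<omega> k - g ((1 - al k) *\<^sub>R xa \<omega> n + al k *\<^sub>R xk \<omega> n)) (z - xk \<omega> n)"
  proof (rule step)
    show "0 < al k" "al k \<le> 1" using al_pos[OF k] by auto
    show "0 < lmb k" using lmb_pos[OF k] .
    show "al k * lmb k \<le> bt" using al_lmb[OF k] .
    show "X z \<noteq> \<infinity>" by (rule z_fin)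
    show "X (xa \<omega> n) \<noteq> \<infinity>" if "al k < 1"
    proof -
      have "n \<ge> 1" using that n al_1 by (cases n) auto
      then show ?thesis by (rule xa_fin)
    qed
  qed
  then show ?thesis
    unfolding EE_def RR_def AA_def dl_def n st_Suc xmd_eq[of \<omega> "Suc n"] by (simp add: algebra_simps)
qed

lemma TT_id1: "k \<ge> 1 \<Longrightarrow> TT k * (1 - al k) = TT (k - 1)"
  unfolding TT_def al_def rsag_alpha_def by (cases k) (auto simp: field_simps)

lemma TT_id2: "k \<ge> 1 \<Longrightarrow> TT k * (al k / (2 * lmb k)) = 2 * L"
proof -
  assume k: "k \<ge> 1"
  then have kp: "real k > 0" by simp
  have "TT k * (al k / (2 * lmb k)) = (real k * (real k + 1) / 2) * (2 / (real k + 1)) / (real k * bt)"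
    unfolding TT_def al_def rsag_alpha_def lmb_eq by simp
  also have "\<dots> = real k / (real k * bt)"
  proof -
    have "(real k * (real k + 1) / 2) * (2 / (real k + 1)) = real k"
      by (simp add: field_simps add_pos_pos)
    then show ?thesis by simp
  qed
  also have "\<dots> = 1 / bt" using kp by simp
  also have "\<dots> = 2 * L" unfolding bt_def by simp
  finally show ?thesis .
qed

lemma TT_nonneg: "TT k \<ge> 0" unfolding TT_def by simp

lemma telescope:
  "TT n * EE \<omega> n + 2 * L * (norm (z - xk \<omega> n))\<^sup>2
     + (\<Sum>k = 1..n. TT k * (3 * L / 8 * (norm (xa \<omega> k - xmd \<omega> k))\<^sup>2))
   \<le> 2 * L * (norm (z - x0))\<^sup>2 + (\<Sum>k = 1..n. TT k * RR \<omega> k)"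
proof (induction n)
  case 0
  then show ?case by (simp add: TT_def st0)
next
  case (Suc n)
  define k where "k = Suc n"
  have k: "k \<ge> 1" unfolding k_def by simp
  have "TT k * EE \<omega> k \<le> TT k * ((1 - al k) * EE \<omega> (k - 1)
     + al k / (2 * lmb k) * ((norm (z - xk \<omega> (k - 1)))\<^sup>2 - (norm (z - xk \<omega> k))\<^sup>2)
     + RR \<omega> k - 3 * L / 8 * (norm (xa \<omega> k - xmd \<omega> k))\<^sup>2)"
    by (rule mult_left_mono[OF step_k[OF k] TT_nonneg])
  also have "\<dots> = (TT k * (1 - al k)) * EE \<omega> (k - 1)
     + (TT k * (al k / (2 * lmb k))) * ((norm (z - xk \<omega> (k - 1)))\<^sup>2 - (norm (z - xk \<omega> k))\<^sup>2)
     + TT k * RR \<omega> k - TT k * (3 * L / 8 * (norm (xa \<omega> k - xmd \<omega> k))\<^sup>2)"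
    by (simp add: algebra_simps)
  also have "\<dots> = TT (k - 1) * EE \<omega> (k - 1)
     + 2 * L * ((norm (z - xk \<omega> (k - 1)))\<^sup>2 - (norm (z - xk \<omega> k))\<^sup>2)
     + TT k * RR \<omega> k - TT k * (3 * L / 8 * (norm (xa \<omega> k - xmd \<omega> k))\<^sup>2)"
    unfolding TT_id1[OF k] TT_id2[OF k] ..
  finally have s: "TT k * EE \<omega> k \<le> \<dots>" .
  have "(\<Sum>k = 1..Suc n. TT k * (3 * L / 8 * (norm (xa \<omega> k - xmd \<omega> k))\<^sup>2))
     = (\<Sum>k = 1..n. TT k * (3 * L / 8 * (norm (xa \<omega> k - xmd \<omega> k))\<^sup>2)) + TT k * (3 * L / 8 * (norm (xa \<omega> k - xmd \<omega> k))\<^sup>2)"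
    unfolding k_def by simp
  moreover have "(\<Sum>k = 1..Suc n. TT k * RR \<omega> k) = (\<Sum>k = 1..n. TT k * RR \<omega> k) + TT k * RR \<omega> k"
    unfolding k_def by simp
  ultimately show ?case using Suc.IH s unfolding k_def by (simp add: algebra_simps)
qed

end


context rsag2
begin

definition "Gt \<omega> k = grad_map X (xmd \<omega> k) (g (xmd \<omega> k)) bt"
definition "BB = (norm z)\<^sup>2 + 2 * M\<^sup>2"

lemma sq_sum_le: "((a::real) + b)\<^sup>2 \<le> 2 * a\<^sup>2 + 2 * b\<^sup>2"
proof -
  have "0 \<le> (a - b)\<^sup>2" by simp
  then show ?thesis by (simp add: power2_eq_square algebra_simps)
qed

lemma Gt_bound:
  assumes k: "k \<ge> 1"
  shows "(norm (Gt \<omega> k))\<^sup>2 \<le> 8 * L\<^sup>2 * (norm (xa \<omega> k - xmd \<omega> k))\<^sup>2 + 2 * (norm (dl \<omega> k))\<^sup>2"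
proof -
  obtain n where n: "k = Suc n" using k by (cases k) auto
  have xa: "xa \<omega> k = prox_map X (xmd \<omega> k) (Gb \<omega> k) bt" unfolding n st_Suc ..
  have g1: "grad_map X (xmd \<omega> k) (Gb \<omega> k) bt = (2 * L) *\<^sub>R (xmd \<omega> k - xa \<omega> k)"
    unfolding grad_map_def xa bt_def by simp
  have n1: "norm (Gt \<omega> k) \<le> norm (grad_map X (xmd \<omega> k) (Gb \<omega> k) bt) + norm (Gt \<omega> k - grad_map X (xmd \<omega> k) (Gb \<omega> k) bt)"
    using norm_triangle_ineq[of "grad_map X (xmd \<omega> k) (Gb \<omega> k) bt" "Gt \<omega> k - grad_map X (xmd \<omega> k) (Gb \<omega> k) bt"] by simp
  have n2: "norm (Gt \<omega> k - grad_map X (xmd \<omega> k) (Gb \<omega> k) bt) \<le> norm (g (xmd \<omega> k) - Gb \<omega> k)"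
    unfolding Gt_def by (rule grad_map_diff[OF bt_pos])
  have n3: "norm (g (xmd \<omega> k) - Gb \<omega> k) = norm (dl \<omega> k)"
    unfolding dl_def by (rule norm_minus_commute)
  have n4: "norm (grad_map X (xmd \<omega> k) (Gb \<omega> k) bt) = 2 * L * norm (xa \<omega> k - xmd \<omega> k)"
    unfolding g1 using L_pos by (simp add: norm_minus_commute)
  have "norm (Gt \<omega> k) \<le> 2 * L * norm (xa \<omega> k - xmd \<omega> k) + norm (dl \<omega> k)"
    using n1 n2 n3 n4 by linarith
  then have "(norm (Gt \<omega> k))\<^sup>2 \<le> (2 * L * norm (xa \<omega> k - xmd \<omega> k) + norm (dl \<omega> k))\<^sup>2"
    by (intro power_mono) auto
  also have "\<dots> \<le> 2 * (2 * L * norm (xa \<omega> k - xmd \<omega> k))\<^sup>2 + 2 * (norm (dl \<omega> k))\<^sup>2"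
    by (rule sq_sum_le)
  finally have "(norm (Gt \<omega> k))\<^sup>2 \<le> 2 * (2 * L * norm (xa \<omega> k - xmd \<omega> k))\<^sup>2 + 2 * (norm (dl \<omega> k))\<^sup>2" .
  moreover have "2 * (2 * L * norm (xa \<omega> k - xmd \<omega> k))\<^sup>2 = 8 * L\<^sup>2 * (norm (xa \<omega> k - xmd \<omega> k))\<^sup>2"
    by (simp add: power2_eq_square algebra_simps)
  ultimately show ?thesis by linarith
qed

lemma AA_1: "AA \<omega> 1 = (norm (z - x0))\<^sup>2"
  unfolding AA_def al_1 xmd_1 by simp

lemma AA_bound:
  assumes k: "k \<ge> 2"
  shows "AA \<omega> k \<le> 2 * al k * BB"
proof -
  have a: "0 < al k" "al k \<le> 1" using al_pos[of k] k by auto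
  have d: "xa \<omega> (k - 1) - xmd \<omega> k = al k *\<^sub>R (xa \<omega> (k - 1) - xk \<omega> (k - 1))"
    unfolding xmd_eq by (simp add: algebra_simps)
  have n1: "norm (xa \<omega> (k - 1) - xk \<omega> (k - 1)) \<le> 2 * M"
  proof -
    have k1: "k - 1 \<ge> 1" using k by simp
    show ?thesis
      using norm_triangle_ineq4[of "xa \<omega> (k - 1)" "xk \<omega> (k - 1)"] xa_bdd[OF k1, of \<omega>] xk_bdd[OF k1, of \<omega>]
      by linarith
  qed
  have "(norm (xa \<omega> (k - 1) - xmd \<omega> k))\<^sup>2 = (al k)\<^sup>2 * (norm (xa \<omega> (k - 1) - xk \<omega> (k - 1)))\<^sup>2"
    unfolding d using a by (simp add: power_mult_distrib)
  also have "\<dots> \<le> (al k)\<^sup>2 * (2 * M)\<^sup>2"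
    using n1 by (intro mult_left_mono power_mono) auto
  finally have t1: "(norm (xa \<omega> (k - 1) - xmd \<omega> k))\<^sup>2 \<le> (al k)\<^sup>2 * (4 * M\<^sup>2)" by (simp add: power_mult_distrib)
  have "(1 - al k) * (norm (xa \<omega> (k - 1) - xmd \<omega> k))\<^sup>2 \<le> (1 - al k) * ((al k)\<^sup>2 * (4 * M\<^sup>2))"
    using t1 a by (intro mult_left_mono) auto
  also have "\<dots> \<le> al k * M\<^sup>2"
  proof -
    have "(1 - al k) * al k * 4 \<le> 1"
    proof -
      have "0 \<le> (2 * al k - 1)\<^sup>2" by simp
      then show ?thesis by (simp add: power2_eq_square algebra_simps)
    qed
    then have "(1 - al k) * al k * 4 * (al k * M\<^sup>2) \<le> 1 * (al k * M\<^sup>2)"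
      using a by (intro mult_right_mono) auto
    then show ?thesis by (simp add: power2_eq_square algebra_simps)
  qed
  finally have p1: "(1 - al k) * (norm (xa \<omega> (k - 1) - xmd \<omega> k))\<^sup>2 \<le> al k * M\<^sup>2" .
  have "norm (z - xmd \<omega> k) \<le> norm z + M"
    using norm_triangle_ineq4[of z "xmd \<omega> k"] xmd_bdd[OF k, of \<omega>] by auto
  then have "(norm (z - xmd \<omega> k))\<^sup>2 \<le> (norm z + M)\<^sup>2" by (intro power_mono) auto
  also have "\<dots> \<le> 2 * (norm z)\<^sup>2 + 2 * M\<^sup>2" by (rule sq_sum_le)
  finally have "al k * (norm (z - xmd \<omega> k))\<^sup>2 \<le> al k * (2 * (norm z)\<^sup>2 + 2 * M\<^sup>2)"
    using a by (intro mult_left_mono) auto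
  with p1 have "AA \<omega> k \<le> al k * M\<^sup>2 + al k * (2 * (norm z)\<^sup>2 + 2 * M\<^sup>2)"
    unfolding AA_def by linarith
  also have "\<dots> \<le> 2 * al k * BB"
    unfolding BB_def using a by (simp add: algebra_simps)
  finally show ?thesis .
qed

lemma TT_al: "k \<ge> 1 \<Longrightarrow> TT k * al k = real k"
  unfolding TT_def al_def rsag_alpha_def by (simp add: field_simps add_pos_pos)

lemma BB_nonneg: "BB \<ge> 0" unfolding BB_def by simp

lemma sum_real_id: "(\<Sum>k = 1..N. real k) = real N * (real N + 1) / 2"
  by (induction N) (auto simp: field_simps)

lemma sum_TT_AA: "(\<Sum>k = 1..N. TT k * AA \<omega> k) \<le> (norm (z - x0))\<^sup>2 + BB * real N * (real N + 1)"
proof -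
  have "(\<Sum>k = 1..N. TT k * AA \<omega> k) \<le> (\<Sum>k = 1..N. (if k = 1 then (norm (z - x0))\<^sup>2 else 0) + 2 * BB * real k)"
  proof (rule sum_mono)
    fix k assume "k \<in> {1..N}"
    then have k: "k \<ge> 1" by simp
    show "TT k * AA \<omega> k \<le> (if k = 1 then (norm (z - x0))\<^sup>2 else 0) + 2 * BB * real k"
    proof (cases "k = 1")
      case True then show ?thesis using BB_nonneg AA_1[of \<omega>] by (simp add: TT_def)
    next
      case False
      then have "k \<ge> 2" using k by simp
      then have "TT k * AA \<omega> k \<le> TT k * (2 * al k * BB)"
        by (intro mult_left_mono AA_bound TT_nonneg)
      also have "\<dots> = 2 * BB * (TT k * al k)" by (simp add: algebra_simps)
      finally show ?thesis using False TT_al[OF k] by simp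
    qed
  qed
  also have "\<dots> = (\<Sum>k = 1..N. (if k = 1 then (norm (z - x0))\<^sup>2 else 0)) + 2 * BB * (\<Sum>k = 1..N. real k)"
    by (simp add: sum.distrib sum_distrib_left)
  also have "(\<Sum>k = 1..N. (if k = 1 then (norm (z - x0))\<^sup>2 else 0)) \<le> (norm (z - x0))\<^sup>2"
    by (cases "N \<ge> 1") (auto simp: sum.delta)
  finally have fin: "(\<Sum>k = 1..N. TT k * AA \<omega> k) \<le> (norm (z - x0))\<^sup>2 + 2 * BB * (\<Sum>k = 1..N. real k)" by simp
  have "2 * BB * (\<Sum>k = 1..N. real k) = BB * real N * (real N + 1)"
    unfolding sum_real_id by (simp add: field_simps)
  with fin show ?thesis by linarith
qed

definition "C0 N = 128 / 3 * L\<^sup>2 * (norm (z - x0))\<^sup>2 + 32 / 3 * L * Lf * ((norm (z - x0))\<^sup>2 + BB * real N * (real N + 1))"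

definition "Ub N \<omega> = C0 N + 134 / 3 * (\<Sum>k = 1..N. TT k * (norm (dl \<omega> k))\<^sup>2)
    + 64 * L / 3 * (\<Sum>k = 1..N. real k * inner (dl \<omega> k) (z - xk \<omega> (k - 1)))"

lemma pathwise: "(\<Sum>k = 1..N. TT k * (norm (Gt \<omega> k))\<^sup>2) \<le> Ub N \<omega>"
proof -
  let ?d = "\<lambda>k. (norm (xa \<omega> k - xmd \<omega> k))\<^sup>2"
  let ?e = "\<lambda>k. (norm (dl \<omega> k))\<^sup>2"
  let ?v = "\<lambda>k. inner (dl \<omega> k) (z - xk \<omega> (k - 1))"
  have tel: "TT N * EE \<omega> N + 2 * L * (norm (z - xk \<omega> N))\<^sup>2 + (\<Sum>k = 1..N. TT k * (3 * L / 8 * ?d k))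
     \<le> 2 * L * (norm (z - x0))\<^sup>2 + (\<Sum>k = 1..N. TT k * RR \<omega> k)" by (rule telescope)
  have "TT N * EE \<omega> N \<ge> 0"
  proof (cases "N = 0")
    case True then show ?thesis by (simp add: TT_def)
  next
    case False then show ?thesis using EE_nonneg[of N \<omega>] TT_nonneg[of N] by simp
  qed
  moreover have "2 * L * (norm (z - xk \<omega> N))\<^sup>2 \<ge> 0" using L_pos by simp
  ultimately have A: "(\<Sum>k = 1..N. TT k * (3 * L / 8 * ?d k)) \<le> 2 * L * (norm (z - x0))\<^sup>2 + (\<Sum>k = 1..N. TT k * RR \<omega> k)"
    using tel by linarith
  have sRR: "(\<Sum>k = 1..N. TT k * RR \<omega> k) = Lf / 2 * (\<Sum>k = 1..N. TT k * AA \<omega> k) + 2 / L * (\<Sum>k = 1..N. TT k * ?e k)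
      + (\<Sum>k = 1..N. real k * ?v k)"
  proof -
    have "(\<Sum>k = 1..N. TT k * RR \<omega> k) = (\<Sum>k = 1..N. Lf / 2 * (TT k * AA \<omega> k) + 2 / L * (TT k * ?e k) + real k * ?v k)"
    proof (rule sum.cong[OF refl])
      fix k assume "k \<in> {1..N}"
      then have k: "k \<ge> 1" by simp
      have "TT k * RR \<omega> k = Lf / 2 * (TT k * AA \<omega> k) + 2 / L * (TT k * ?e k) + (TT k * al k) * ?v k"
        unfolding RR_def by (simp add: algebra_simps)
      then show "TT k * RR \<omega> k = Lf / 2 * (TT k * AA \<omega> k) + 2 / L * (TT k * ?e k) + real k * ?v k"
        using TT_al[OF k] by simp
    qed
    then show ?thesis by (simp add: sum.distrib sum_distrib_left)
  qed
  have sd: "(\<Sum>k = 1..N. TT k * (3 * L / 8 * ?d k)) = 3 * L / 8 * (\<Sum>k = 1..N. TT k * ?d k)"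
    by (simp add: sum_distrib_left algebra_simps)
  have "(\<Sum>k = 1..N. TT k * (norm (Gt \<omega> k))\<^sup>2) \<le> (\<Sum>k = 1..N. TT k * (8 * L\<^sup>2 * ?d k + 2 * ?e k))"
    by (rule sum_mono) (auto intro!: mult_left_mono Gt_bound TT_nonneg)
  also have "\<dots> = 8 * L\<^sup>2 * (\<Sum>k = 1..N. TT k * ?d k) + 2 * (\<Sum>k = 1..N. TT k * ?e k)"
    by (simp add: sum.distrib sum_distrib_left algebra_simps)
  finally have B: "(\<Sum>k = 1..N. TT k * (norm (Gt \<omega> k))\<^sup>2) \<le> 8 * L\<^sup>2 * (\<Sum>k = 1..N. TT k * ?d k) + 2 * (\<Sum>k = 1..N. TT k * ?e k)" .
  define SD where "SD = (\<Sum>k = 1..N. TT k * ?d k)"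
  define SE where "SE = (\<Sum>k = 1..N. TT k * ?e k)"
  define SA where "SA = (\<Sum>k = 1..N. TT k * AA \<omega> k)"
  define SV where "SV = (\<Sum>k = 1..N. real k * ?v k)"
  have A': "3 * L / 8 * SD \<le> 2 * L * (norm (z - x0))\<^sup>2 + (Lf / 2 * SA + 2 / L * SE + SV)"
    using A unfolding sd sRR SD_def SE_def SA_def SV_def .
  have B': "(\<Sum>k = 1..N. TT k * (norm (Gt \<omega> k))\<^sup>2) \<le> 8 * L\<^sup>2 * SD + 2 * SE"
    using B unfolding SD_def SE_def .
  have SA: "SA \<le> (norm (z - x0))\<^sup>2 + BB * real N * (real N + 1)" unfolding SA_def by (rule sum_TT_AA)
  have "8 * L\<^sup>2 * SD = 64 * L / 3 * (3 * L / 8 * SD)" by (simp add: power2_eq_square algebra_simps)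
  also have "\<dots> \<le> 64 * L / 3 * (2 * L * (norm (z - x0))\<^sup>2 + (Lf / 2 * SA + 2 / L * SE + SV))"
    using A' L_pos by (intro mult_left_mono) auto
  also have "\<dots> = 128 / 3 * L\<^sup>2 * (norm (z - x0))\<^sup>2 + 32 / 3 * L * Lf * SA + 128 / 3 * SE + 64 * L / 3 * SV"
    using L_pos by (simp add: field_simps power2_eq_square)
  also have "32 / 3 * L * Lf * SA \<le> 32 / 3 * L * Lf * ((norm (z - x0))\<^sup>2 + BB * real N * (real N + 1))"
    using SA L_pos Lf_nonneg by (intro mult_left_mono) auto
  finally have "8 * L\<^sup>2 * SD \<le> 128 / 3 * L\<^sup>2 * (norm (z - x0))\<^sup>2 + 32 / 3 * L * Lf * ((norm (z - x0))\<^sup>2 + BB * real N * (real N + 1)) + 128 / 3 * SE + 64 * L / 3 * SV"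
    by simp
  with B' show ?thesis unfolding Ub_def C0_def SE_def[symmetric] SV_def[symmetric] by linarith
qed

end


locale sorcl =
  fixes \<Xi> :: "'b measure" and Gor :: "'a::euclidean_space \<Rightarrow> 'b \<Rightarrow> 'a" and gg :: "'a \<Rightarrow> 'a" and \<sigma> :: real
  assumes prob: "prob_space \<Xi>"
    and G_meas: "(\<lambda>(x, \<xi>). Gor x \<xi>) \<in> borel_measurable (borel \<Otimes>\<^sub>M \<Xi>)"
    and G_int: "\<And>x. integrable \<Xi> (Gor x)"
    and G_unb: "\<And>x. (\<integral>\<xi>. Gor x \<xi> \<partial>\<Xi>) = gg x"
    and G_var: "\<And>x. (\<integral>\<^sup>+\<xi>. ennreal ((norm (Gor x \<xi> - gg x))\<^sup>2) \<partial>\<Xi>) \<le> ennreal (\<sigma>\<^sup>2)"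
    and gg_meas: "gg \<in> borel_measurable borel"
begin

definition PP :: "(nat \<times> nat \<Rightarrow> 'b) measure" where "PP = PiM UNIV (\<lambda>_. \<Xi>)"
definition PPc :: "nat \<times> nat \<Rightarrow> (nat \<times> nat \<Rightarrow> 'b) measure" where "PPc c = PiM (UNIV - {c}) (\<lambda>_. \<Xi>)"

lemma prob_PP: "prob_space PP"
  unfolding PP_def by (rule prob_space_PiM) (use prob in auto)

lemma prob_PPc: "prob_space (PPc c)"
  unfolding PPc_def by (rule prob_space_PiM) (use prob in auto)

lemma upd_meas: "(\<lambda>(x, Y). Y(c := x)) \<in> measurable (\<Xi> \<Otimes>\<^sub>M PPc c) PP"
proof -
  have "(\<lambda>p. (snd p)(c := fst p)) \<in> measurable (\<Xi> \<Otimes>\<^sub>M PPc c) (PiM UNIV (\<lambda>_. \<Xi>))"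
    by (rule measurable_fun_upd[where J="UNIV - {c}"]) (auto simp: PPc_def)
  then show ?thesis unfolding PP_def by (simp add: case_prod_beta)
qed

lemma PP_split: "PP = distr (\<Xi> \<Otimes>\<^sub>M PPc c) PP (\<lambda>(x, Y). Y(c := x))"
proof -
  have "distr (\<Xi> \<Otimes>\<^sub>M (\<Pi>\<^sub>M i\<in>UNIV - {c}. \<Xi>)) (\<Pi>\<^sub>M i\<in>insert c (UNIV - {c}). \<Xi>) (\<lambda>(x, X). X(c := x)) =
    (\<Pi>\<^sub>M i\<in>insert c (UNIV - {c}). \<Xi>)"
    by (rule distr_pair_PiM_eq_PiM) (use prob in auto)
  then show ?thesis unfolding PP_def PPc_def by simp
qed

lemma comp_meas: "(\<lambda>\<omega>. \<omega> c) \<in> measurable PP \<Xi>"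
  unfolding PP_def by (rule measurable_component_singleton) simp

lemma nn_split:
  assumes F: "F \<in> borel_measurable PP"
  shows "(\<integral>\<^sup>+\<omega>. F \<omega> \<partial>PP) = (\<integral>\<^sup>+Y. (\<integral>\<^sup>+x. F (Y(c := x)) \<partial>\<Xi>) \<partial>PPc c)"
proof -
  interpret Xi: prob_space \<Xi> by (rule prob)
  interpret Pc: prob_space "PPc c" by (rule prob_PPc)
  interpret pair_sigma_finite \<Xi> "PPc c" ..
  have "(\<integral>\<^sup>+\<omega>. F \<omega> \<partial>PP) = (\<integral>\<^sup>+\<omega>. F \<omega> \<partial>distr (\<Xi> \<Otimes>\<^sub>M PPc c) PP (\<lambda>(x, Y). Y(c := x)))"
    by (subst PP_split[of c]) simp
  also have "\<dots> = (\<integral>\<^sup>+p. F ((\<lambda>(x, Y). Y(c := x)) p) \<partial>(\<Xi> \<Otimes>\<^sub>M PPc c))"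
    by (rule nn_integral_distr[OF upd_meas]) (use F in simp)
  also have "\<dots> = (\<integral>\<^sup>+Y. (\<integral>\<^sup>+x. F (Y(c := x)) \<partial>\<Xi>) \<partial>PPc c)"
    by (subst nn_integral_snd[symmetric]) (auto intro: measurable_comp[OF upd_meas F, unfolded comp_def])
  finally show ?thesis .
qed

lemma int_split:
  fixes F :: "(nat \<times> nat \<Rightarrow> 'b) \<Rightarrow> real"
  assumes F: "integrable PP F"
  shows "(\<integral>\<omega>. F \<omega> \<partial>PP) = (\<integral>Y. (\<integral>x. F (Y(c := x)) \<partial>\<Xi>) \<partial>PPc c)"
proof -
  interpret Xi: prob_space \<Xi> by (rule prob)
  interpret Pc: prob_space "PPc c" by (rule prob_PPc)
  interpret pair_sigma_finite \<Xi> "PPc c" ..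
  have Fm: "F \<in> borel_measurable PP" using F by auto
  have "(\<integral>\<omega>. F \<omega> \<partial>PP) = (\<integral>\<omega>. F \<omega> \<partial>distr (\<Xi> \<Otimes>\<^sub>M PPc c) PP (\<lambda>(x, Y). Y(c := x)))"
    by (subst PP_split[of c]) simp
  also have "\<dots> = (\<integral>p. F ((\<lambda>(x, Y). Y(c := x)) p) \<partial>(\<Xi> \<Otimes>\<^sub>M PPc c))"
    by (rule integral_distr[OF upd_meas Fm])
  also have "\<dots> = (\<integral>Y. (\<integral>x. F (Y(c := x)) \<partial>\<Xi>) \<partial>PPc c)"
  proof -
    have "integrable (distr (\<Xi> \<Otimes>\<^sub>M PPc c) PP (\<lambda>(x, Y). Y(c := x))) F"
      using F by (subst PP_split[of c, symmetric])
    then have "integrable (\<Xi> \<Otimes>\<^sub>M PPc c) (\<lambda>p. F ((\<lambda>(x, Y). Y(c := x)) p))"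
      by (subst (asm) integrable_distr_eq[OF upd_meas Fm])
    then have "integrable (\<Xi> \<Otimes>\<^sub>M PPc c) (case_prod (\<lambda>x Y. F (Y(c := x))))"
      unfolding case_prod_unfold by simp
    from integral_snd[OF this] show ?thesis unfolding case_prod_unfold by simp
  qed
  finally show ?thesis .
qed

definition "aa Y c \<omega> = Gor (Y \<omega>) (\<omega> c) - gg (Y \<omega>)"

lemma aa_meas:
  assumes Y: "Y \<in> borel_measurable PP"
  shows "aa Y c \<in> borel_measurable PP"
proof -
  have "(\<lambda>\<omega>. (Y \<omega>, \<omega> c)) \<in> measurable PP (borel \<Otimes>\<^sub>M \<Xi>)"
    using Y comp_meas by (rule measurable_Pair)
  from measurable_comp[OF this G_meas] have "(\<lambda>\<omega>. Gor (Y \<omega>) (\<omega> c)) \<in> borel_measurable PP"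
    by (simp add: comp_def)
  moreover have "(\<lambda>\<omega>. gg (Y \<omega>)) \<in> borel_measurable PP"
    using measurable_comp[OF Y gg_meas] by (simp add: comp_def)
  ultimately show ?thesis unfolding aa_def by (intro borel_measurable_diff) auto
qed

lemma diag_nn:
  assumes Y: "Y \<in> borel_measurable PP" and ind: "\<And>w t. Y (w(c := t)) = Y w"
  shows "(\<integral>\<^sup>+\<omega>. ennreal ((norm (aa Y c \<omega>))\<^sup>2) \<partial>PP) \<le> ennreal (\<sigma>\<^sup>2)"
proof -
  interpret Pc: prob_space "PPc c" by (rule prob_PPc)
  have m: "(\<lambda>\<omega>. ennreal ((norm (aa Y c \<omega>))\<^sup>2)) \<in> borel_measurable PP"
    using aa_meas[OF Y] by measurable
  have "(\<integral>\<^sup>+\<omega>. ennreal ((norm (aa Y c \<omega>))\<^sup>2) \<partial>PP)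
      = (\<integral>\<^sup>+Z. (\<integral>\<^sup>+x. ennreal ((norm (aa Y c (Z(c := x))))\<^sup>2) \<partial>\<Xi>) \<partial>PPc c)"
    by (rule nn_split[OF m])
  also have "\<dots> = (\<integral>\<^sup>+Z. (\<integral>\<^sup>+x. ennreal ((norm (Gor (Y Z) x - gg (Y Z)))\<^sup>2) \<partial>\<Xi>) \<partial>PPc c)"
    unfolding aa_def ind by simp
  also have "\<dots> \<le> (\<integral>\<^sup>+Z. ennreal (\<sigma>\<^sup>2) \<partial>PPc c)"
    by (rule nn_integral_mono) (rule G_var)
  also have "\<dots> = ennreal (\<sigma>\<^sup>2)" by (simp add: Pc.emeasure_space_1)
  finally show ?thesis .
qed

lemma diag:
  assumes Y: "Y \<in> borel_measurable PP" and ind: "\<And>w t. Y (w(c := t)) = Y w"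
  shows "integrable PP (\<lambda>\<omega>. (norm (aa Y c \<omega>))\<^sup>2)" and "(\<integral>\<omega>. (norm (aa Y c \<omega>))\<^sup>2 \<partial>PP) \<le> \<sigma>\<^sup>2"
proof -
  have m: "(\<lambda>\<omega>. (norm (aa Y c \<omega>))\<^sup>2) \<in> borel_measurable PP"
    using aa_meas[OF Y] by measurable
  have nn: "(\<integral>\<^sup>+\<omega>. ennreal ((norm (aa Y c \<omega>))\<^sup>2) \<partial>PP) \<le> ennreal (\<sigma>\<^sup>2)" by (rule diag_nn[OF Y ind])
  show int: "integrable PP (\<lambda>\<omega>. (norm (aa Y c \<omega>))\<^sup>2)"
    unfolding integrable_iff_bounded using m nn by (auto simp: ennreal_less_top le_less_trans)
  have "ennreal (\<integral>\<omega>. (norm (aa Y c \<omega>))\<^sup>2 \<partial>PP) = (\<integral>\<^sup>+\<omega>. ennreal ((norm (aa Y c \<omega>))\<^sup>2) \<partial>PP)"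
    by (rule nn_integral_eq_integral[OF int, symmetric]) auto
  with nn have "ennreal (\<integral>\<omega>. (norm (aa Y c \<omega>))\<^sup>2 \<partial>PP) \<le> ennreal (\<sigma>\<^sup>2)" by simp
  then show "(\<integral>\<omega>. (norm (aa Y c \<omega>))\<^sup>2 \<partial>PP) \<le> \<sigma>\<^sup>2"
    by (subst (asm) ennreal_le_iff) auto
qed

lemma zero_mean:
  assumes Y: "Y \<in> borel_measurable PP" and ind: "\<And>w t. Y (w(c := t)) = Y w"
    and V: "V \<in> borel_measurable PP" and indV: "\<And>w t. V (w(c := t)) = V w"
    and Vsq: "integrable PP (\<lambda>\<omega>. (norm (V \<omega>))\<^sup>2)"
  shows "integrable PP (\<lambda>\<omega>. inner (aa Y c \<omega>) (V \<omega>))" and "(\<integral>\<omega>. inner (aa Y c \<omega>) (V \<omega>) \<partial>PP) = 0"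
proof -
  interpret Xi: prob_space \<Xi> by (rule prob)
  have am: "aa Y c \<in> borel_measurable PP" by (rule aa_meas[OF Y])
  have im: "(\<lambda>\<omega>. inner (aa Y c \<omega>) (V \<omega>)) \<in> borel_measurable PP"
    using am V by measurable
  show int: "integrable PP (\<lambda>\<omega>. inner (aa Y c \<omega>) (V \<omega>))"
  proof (rule Bochner_Integration.integrable_bound[OF _ im])
    show "integrable PP (\<lambda>\<omega>. (norm (aa Y c \<omega>))\<^sup>2 + (norm (V \<omega>))\<^sup>2)"
      using diag(1)[OF Y ind] Vsq by auto
    show "AE \<omega> in PP. norm (inner (aa Y c \<omega>) (V \<omega>)) \<le> norm ((norm (aa Y c \<omega>))\<^sup>2 + (norm (V \<omega>))\<^sup>2)"
    proof (rule AE_I2)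
      fix \<omega>
      have "\<bar>inner (aa Y c \<omega>) (V \<omega>)\<bar> \<le> norm (aa Y c \<omega>) * norm (V \<omega>)" by (rule Cauchy_Schwarz_ineq2)
      also have "\<dots> \<le> (norm (aa Y c \<omega>))\<^sup>2 + (norm (V \<omega>))\<^sup>2"
      proof -
        have "0 \<le> (norm (aa Y c \<omega>) - norm (V \<omega>))\<^sup>2" by simp
        then have "2 * (norm (aa Y c \<omega>) * norm (V \<omega>)) \<le> (norm (aa Y c \<omega>))\<^sup>2 + (norm (V \<omega>))\<^sup>2"
          by (simp add: power2_eq_square algebra_simps)
        moreover have "0 \<le> norm (aa Y c \<omega>) * norm (V \<omega>)" by simp
        ultimately show ?thesis by linarith
      qed
      finally show "norm (inner (aa Y c \<omega>) (V \<omega>)) \<le> norm ((norm (aa Y c \<omega>))\<^sup>2 + (norm (V \<omega>))\<^sup>2)" by simp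
    qed
  qed
  have "(\<integral>\<omega>. inner (aa Y c \<omega>) (V \<omega>) \<partial>PP) = (\<integral>Z. (\<integral>x. inner (aa Y c (Z(c := x))) (V (Z(c := x))) \<partial>\<Xi>) \<partial>PPc c)"
    by (rule int_split[OF int])
  also have "\<dots> = (\<integral>Z. 0 \<partial>PPc c)"
  proof (rule Bochner_Integration.integral_cong[OF refl])
    fix Z
    have "(\<integral>x. inner (aa Y c (Z(c := x))) (V (Z(c := x))) \<partial>\<Xi>) = (\<integral>x. inner (Gor (Y Z) x - gg (Y Z)) (V Z) \<partial>\<Xi>)"
      unfolding aa_def ind indV by simp
    also have "\<dots> = inner (\<integral>x. (Gor (Y Z) x - gg (Y Z)) \<partial>\<Xi>) (V Z)"
      by (rule integral_inner_left) (use G_int in auto)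
    also have "(\<integral>x. (Gor (Y Z) x - gg (Y Z)) \<partial>\<Xi>) = gg (Y Z) - gg (Y Z)"
      by (subst Bochner_Integration.integral_diff) (use G_int G_unb in \<open>auto simp: Xi.prob_space\<close>)
    also have "inner (gg (Y Z) - gg (Y Z)) (V Z) = 0" by simp
    finally show "(\<integral>x. inner (aa Y c (Z(c := x))) (V (Z(c := x))) \<partial>\<Xi>) = 0" .
  qed
  also have "\<dots> = 0" by simp
  finally show "(\<integral>\<omega>. inner (aa Y c \<omega>) (V \<omega>) \<partial>PP) = 0" .
qed


lemma aa_indep:
  assumes ind: "\<And>w t. Y (w(c := t)) = Y w" and ne: "c' \<noteq> c"
  shows "aa Y c' (w(c := t)) = aa Y c' w"
  unfolding aa_def ind using ne by simp

lemma var_mean: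
  fixes k m :: nat
  assumes Y: "Y \<in> borel_measurable PP" and ind: "\<And>i w t. Y (w((k, i) := t)) = Y w" and m: "m \<ge> 1"
  shows "integrable PP (\<lambda>\<omega>. (norm ((1 / real m) *\<^sub>R (\<Sum>i = 1..m. aa Y (k, i) \<omega>)))\<^sup>2)"
    and "(\<integral>\<omega>. (norm ((1 / real m) *\<^sub>R (\<Sum>i = 1..m. aa Y (k, i) \<omega>)))\<^sup>2 \<partial>PP) \<le> \<sigma>\<^sup>2 / real m"
proof -
  define I where "I = {1..m}"
  have pw: "(norm ((1 / real m) *\<^sub>R (\<Sum>i\<in>I. aa Y (k, i) \<omega>)))\<^sup>2
      = (1 / real m)\<^sup>2 * (\<Sum>i\<in>I. \<Sum>j\<in>I. inner (aa Y (k, i) \<omega>) (aa Y (k, j) \<omega>))" for \<omega>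
  proof -
    have e: "inner (\<Sum>i\<in>I. aa Y (k, i) \<omega>) (\<Sum>j\<in>I. aa Y (k, j) \<omega>)
        = (\<Sum>i\<in>I. \<Sum>j\<in>I. inner (aa Y (k, i) \<omega>) (aa Y (k, j) \<omega>))"
      unfolding inner_sum_left by (simp only: inner_sum_right)
    show ?thesis
      unfolding power2_norm_eq_inner inner_scaleR_left inner_scaleR_right e by (simp add: power2_eq_square)
  qed
  have intij: "integrable PP (\<lambda>\<omega>. inner (aa Y (k, i) \<omega>) (aa Y (k, j) \<omega>))"
    and valij: "(\<integral>\<omega>. inner (aa Y (k, i) \<omega>) (aa Y (k, j) \<omega>) \<partial>PP) \<le> (if i = j then \<sigma>\<^sup>2 else 0)" for i j
  proof -
    have ind1: "\<And>w t. Y (w((k, i) := t)) = Y w" by (rule ind)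
    have ind2: "\<And>w t. Y (w((k, j) := t)) = Y w" by (rule ind)
    have "integrable PP (\<lambda>\<omega>. inner (aa Y (k, i) \<omega>) (aa Y (k, j) \<omega>)) \<and>
      (\<integral>\<omega>. inner (aa Y (k, i) \<omega>) (aa Y (k, j) \<omega>) \<partial>PP) \<le> (if i = j then \<sigma>\<^sup>2 else 0)"
    proof (cases "i = j")
      case True
      have e: "(\<lambda>\<omega>. inner (aa Y (k, i) \<omega>) (aa Y (k, j) \<omega>)) = (\<lambda>\<omega>. (norm (aa Y (k, i) \<omega>))\<^sup>2)"
        using True by (simp add: power2_norm_eq_inner)
      show ?thesis unfolding e using diag[OF Y ind1] True by simp
    next
      case False
      have zm: "integrable PP (\<lambda>\<omega>. inner (aa Y (k, i) \<omega>) (aa Y (k, j) \<omega>))"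
           "(\<integral>\<omega>. inner (aa Y (k, i) \<omega>) (aa Y (k, j) \<omega>) \<partial>PP) = 0"
        by (rule zero_mean[OF Y ind1 aa_meas[OF Y] aa_indep[OF ind1] diag(1)[OF Y ind2]]; use False in simp)+
      then show ?thesis using False by simp
    qed
    then show "integrable PP (\<lambda>\<omega>. inner (aa Y (k, i) \<omega>) (aa Y (k, j) \<omega>))"
      and "(\<integral>\<omega>. inner (aa Y (k, i) \<omega>) (aa Y (k, j) \<omega>) \<partial>PP) \<le> (if i = j then \<sigma>\<^sup>2 else 0)" by auto
  qed
  have int2: "integrable PP (\<lambda>\<omega>. \<Sum>i\<in>I. \<Sum>j\<in>I. inner (aa Y (k, i) \<omega>) (aa Y (k, j) \<omega>))"
    using intij by (intro Bochner_Integration.integrable_sum) auto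
  show "integrable PP (\<lambda>\<omega>. (norm ((1 / real m) *\<^sub>R (\<Sum>i = 1..m. aa Y (k, i) \<omega>)))\<^sup>2)"
    unfolding I_def[symmetric] pw using int2 by (intro integrable_mult_right)
  have "(\<integral>\<omega>. (norm ((1 / real m) *\<^sub>R (\<Sum>i = 1..m. aa Y (k, i) \<omega>)))\<^sup>2 \<partial>PP)
      = (1 / real m)\<^sup>2 * (\<Sum>i\<in>I. \<Sum>j\<in>I. (\<integral>\<omega>. inner (aa Y (k, i) \<omega>) (aa Y (k, j) \<omega>) \<partial>PP))"
    unfolding I_def[symmetric] pw
    by (simp add: Bochner_Integration.integral_sum intij Bochner_Integration.integrable_sum)
  also have "\<dots> \<le> (1 / real m)\<^sup>2 * (\<Sum>i\<in>I. \<Sum>j\<in>I. (if i = j then \<sigma>\<^sup>2 else 0))"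
    by (intro mult_left_mono sum_mono valij) auto
  also have "\<dots> = (1 / real m)\<^sup>2 * (real m * \<sigma>\<^sup>2)"
    unfolding I_def by simp
  also have "\<dots> = \<sigma>\<^sup>2 / real m" using m by (simp add: power2_eq_square field_simps)
  finally show "(\<integral>\<omega>. (norm ((1 / real m) *\<^sub>R (\<Sum>i = 1..m. aa Y (k, i) \<omega>)))\<^sup>2 \<partial>PP) \<le> \<sigma>\<^sup>2 / real m" .
qed

lemma inner_mean_zero:
  fixes k m :: nat
  assumes Y: "Y \<in> borel_measurable PP" and ind: "\<And>i w t. Y (w((k, i) := t)) = Y w"
    and V: "V \<in> borel_measurable PP" and indV: "\<And>i w t. V (w((k, i) := t)) = V w"
    and Vsq: "integrable PP (\<lambda>\<omega>. (norm (V \<omega>))\<^sup>2)"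
  shows "integrable PP (\<lambda>\<omega>. inner ((1 / real m) *\<^sub>R (\<Sum>i = 1..m. aa Y (k, i) \<omega>)) (V \<omega>))"
    and "(\<integral>\<omega>. inner ((1 / real m) *\<^sub>R (\<Sum>i = 1..m. aa Y (k, i) \<omega>)) (V \<omega>) \<partial>PP) = 0"
proof -
  have pw: "inner ((1 / real m) *\<^sub>R (\<Sum>i = 1..m. aa Y (k, i) \<omega>)) (V \<omega>)
      = (1 / real m) * (\<Sum>i = 1..m. inner (aa Y (k, i) \<omega>) (V \<omega>))" for \<omega>
    by (simp add: inner_sum_left)
  have zi: "integrable PP (\<lambda>\<omega>. inner (aa Y (k, i) \<omega>) (V \<omega>))"
     and zv: "(\<integral>\<omega>. inner (aa Y (k, i) \<omega>) (V \<omega>) \<partial>PP) = 0" for i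
    using zero_mean[OF Y ind V indV Vsq] by auto
  show "integrable PP (\<lambda>\<omega>. inner ((1 / real m) *\<^sub>R (\<Sum>i = 1..m. aa Y (k, i) \<omega>)) (V \<omega>))"
    unfolding pw using zi by (intro integrable_mult_right Bochner_Integration.integrable_sum) auto
  show "(\<integral>\<omega>. inner ((1 / real m) *\<^sub>R (\<Sum>i = 1..m. aa Y (k, i) \<omega>)) (V \<omega>) \<partial>PP) = 0"
    unfolding pw using zi zv by (simp add: Bochner_Integration.integral_sum)
qed

end


locale full = rsag2 X f h gf gh Lf Lh M Gor \<sigma> Dt x0 z + sorcl \<Xi> Gor "\<lambda>x. gf x + gh x" \<sigma>
  for X :: "'a::euclidean_space \<Rightarrow> ereal" and f h gf gh Lf Lh M and Gor :: "'a \<Rightarrow> 'b \<Rightarrow> 'a"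
    and \<sigma> Dt x0 z and \<Xi> :: "'b measure" +
  assumes \<sigma>_pos: "\<sigma> > 0" and Dt_pos: "Dt > 0"
begin

lemma g_eq: "g = (\<lambda>x. gf x + gh x)" unfolding g_def[abs_def] ..

lemma mb_pos: "k \<ge> 1 \<Longrightarrow> mb k \<ge> 1"
proof -
  assume k: "k \<ge> 1"
  have "\<sigma>\<^sup>2 * real k / (L * Dt\<^sup>2) > 0" using k \<sigma>_pos Dt_pos L_pos by (simp add: mult_pos_pos)
  then have c: "\<lceil>\<sigma>\<^sup>2 * real k / (L * Dt\<^sup>2)\<rceil> \<ge> 1" by simp
  then show ?thesis unfolding mb_def rsag_batch_def by (subst le_nat_iff) auto
qed

lemma mb_ge: "k \<ge> 1 \<Longrightarrow> real (mb k) \<ge> \<sigma>\<^sup>2 * real k / (L * Dt\<^sup>2)"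
proof -
  have "\<sigma>\<^sup>2 * real k / (L * Dt\<^sup>2) \<le> of_int \<lceil>\<sigma>\<^sup>2 * real k / (L * Dt\<^sup>2)\<rceil>" by (rule le_of_int_ceiling)
  also have "\<dots> = real (nat \<lceil>\<sigma>\<^sup>2 * real k / (L * Dt\<^sup>2)\<rceil>)"
  proof -
    have "\<sigma>\<^sup>2 * real k / (L * Dt\<^sup>2) \<ge> 0" using L_pos by simp
    then have "\<lceil>\<sigma>\<^sup>2 * real k / (L * Dt\<^sup>2)\<rceil> \<ge> 0" by simp
    then show ?thesis by simp
  qed
  finally show ?thesis unfolding mb_def rsag_batch_def .
qed

lemma g_cont: "continuous_on UNIV g"
proof -
  have "continuous_on UNIV gf" using f_lip by (rule lipschitz_on_continuous_on)
  moreover have "continuous_on UNIV gh" using h_lip by (rule lipschitz_on_continuous_on)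
  ultimately show ?thesis unfolding g_eq by (intro continuous_intros)
qed

lemma prox_meas:
  assumes a: "a \<in> borel_measurable N" and b: "b \<in> borel_measurable N" and c: "c > 0"
  shows "(\<lambda>w. prox_map X (a w) (b w) c) \<in> borel_measurable N"
  using borel_measurable_continuous_on[OF prox_cont[OF c] borel_measurable_Pair[OF a b]] by simp

lemma Gor_meas:
  assumes Y: "Y \<in> borel_measurable PP"
  shows "(\<lambda>w. Gor (Y w) (w c)) \<in> borel_measurable PP"
proof -
  have "(\<lambda>w. (Y w, w c)) \<in> measurable PP (borel \<Otimes>\<^sub>M \<Xi>)"
    using Y comp_meas by (rule measurable_Pair)
  from measurable_comp[OF this G_meas] show ?thesis by (simp add: comp_def)
qed

lemma st_meas: "(\<lambda>w. xk w n) \<in> borel_measurable PP \<and> (\<lambda>w. xa w n) \<in> borel_measurable PP"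
proof (induction n)
  case 0 then show ?case by (simp add: st0)
next
  case (Suc n)
  have xm: "(\<lambda>w. xmd w (Suc n)) \<in> borel_measurable PP"
    unfolding xmd_eq using Suc
    by (intro borel_measurable_add borel_measurable_scaleR borel_measurable_const) auto
  have gb: "(\<lambda>w. Gb w (Suc n)) \<in> borel_measurable PP"
    unfolding Gb_def using Gor_meas[OF xm]
    by (intro borel_measurable_scaleR borel_measurable_sum borel_measurable_const) auto
  show ?case unfolding st_Suc
    using prox_meas[OF conjunct1[OF Suc] gb lmb_pos[of "Suc n"]] prox_meas[OF xm gb bt_pos] by simp
qed

lemma xmd_meas: "(\<lambda>w. xmd w k) \<in> borel_measurable PP"
  unfolding xmd_eq using st_meas[of "k - 1"]
  by (intro borel_measurable_add borel_measurable_scaleR borel_measurable_const) auto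

lemma dep: "(\<And>j i. j \<le> n \<Longrightarrow> w (j, i) = w' (j, i)) \<Longrightarrow> xk w n = xk w' n \<and> xa w n = xa w' n"
proof (induction n)
  case 0 then show ?case by (simp add: st0)
next
  case (Suc n)
  have ih: "xk w n = xk w' n \<and> xa w n = xa w' n" using Suc.IH Suc.prems by auto
  have xm: "xmd w (Suc n) = xmd w' (Suc n)" unfolding xmd_eq using ih by simp
  have gb: "Gb w (Suc n) = Gb w' (Suc n)" unfolding Gb_def xm using Suc.prems by simp
  show ?case unfolding st_Suc xm gb using ih by simp
qed

lemma xmd_indep: "k \<ge> 1 \<Longrightarrow> xmd (w((k, i) := t)) k = xmd w k"
proof -
  assume k: "k \<ge> 1"
  have "xk (w((k, i) := t)) (k - 1) = xk w (k - 1) \<and> xa (w((k, i) := t)) (k - 1) = xa w (k - 1)"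
    by (rule dep) (use k in auto)
  then show ?thesis unfolding xmd_eq by simp
qed

lemma xk_indep: "k \<ge> 1 \<Longrightarrow> xk (w((k, i) := t)) (k - 1) = xk w (k - 1)"
proof -
  assume k: "k \<ge> 1"
  have "xk (w((k, i) := t)) (k - 1) = xk w (k - 1) \<and> xa (w((k, i) := t)) (k - 1) = xa w (k - 1)"
    by (rule dep) (use k in auto)
  then show ?thesis by simp
qed

lemma dl_eq: "k \<ge> 1 \<Longrightarrow> dl w k = (1 / real (mb k)) *\<^sub>R (\<Sum>i = 1..mb k. aa (\<lambda>w. xmd w k) (k, i) w)"
proof -
  assume k: "k \<ge> 1"
  have m: "real (mb k) \<noteq> 0" using mb_pos[OF k] by simp
  show ?thesis
    unfolding dl_def Gb_def aa_def g_eq using m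
    by (simp add: sum_subtractf scaleR_diff_right sum_constant_scaleR)
qed

lemma dl_sq:
  assumes k: "k \<ge> 1"
  shows "integrable PP (\<lambda>w. (norm (dl w k))\<^sup>2)" "(\<integral>w. (norm (dl w k))\<^sup>2 \<partial>PP) \<le> \<sigma>\<^sup>2 / real (mb k)"
  unfolding dl_eq[OF k]
  by (rule var_mean[OF xmd_meas xmd_indep[OF k] mb_pos[OF k]])+

lemma xk_bound: "norm (xk w n) \<le> norm x0 + M"
proof (cases "n = 0")
  case True then show ?thesis using M_nonneg by (simp add: st0)
next
  case False
  then have "norm (xk w n) \<le> M" using xk_bdd[of n w] by simp
  moreover have "0 \<le> norm x0" by simp
  ultimately show ?thesis by linarith
qed

lemma dl_inner:
  assumes k: "k \<ge> 1"
  shows "integrable PP (\<lambda>w. inner (dl w k) (z - xk w (k - 1)))" "(\<integral>w. inner (dl w k) (z - xk w (k - 1)) \<partial>PP) = 0"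
proof -
  interpret PPp: prob_space PP by (rule prob_PP)
  have V: "(\<lambda>w. z - xk w (k - 1)) \<in> borel_measurable PP" using st_meas[of "k - 1"]
    by (intro borel_measurable_diff borel_measurable_const) auto
  have indV: "\<And>i w t. z - xk (w((k, i) := t)) (k - 1) = z - xk w (k - 1)" using xk_indep[OF k] by simp
  have Vsq: "integrable PP (\<lambda>w. (norm (z - xk w (k - 1)))\<^sup>2)"
  proof (rule Bochner_Integration.integrable_bound)
    show "integrable PP (\<lambda>w. (norm z + norm x0 + M)\<^sup>2)" by simp
    show "(\<lambda>w. (norm (z - xk w (k - 1)))\<^sup>2) \<in> borel_measurable PP" using V by measurable
    show "AE w in PP. norm ((norm (z - xk w (k - 1)))\<^sup>2) \<le> norm ((norm z + norm x0 + M)\<^sup>2)"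
    proof (rule AE_I2)
      fix w
      have "norm (z - xk w (k - 1)) \<le> norm z + norm (xk w (k - 1))" by (rule norm_triangle_ineq4)
      also have "\<dots> \<le> norm z + norm x0 + M" using xk_bound[of w "k - 1"] by simp
      finally have "(norm (z - xk w (k - 1)))\<^sup>2 \<le> (norm z + norm x0 + M)\<^sup>2" by (intro power_mono) auto
      then show "norm ((norm (z - xk w (k - 1)))\<^sup>2) \<le> norm ((norm z + norm x0 + M)\<^sup>2)" by simp
    qed
  qed
  show "integrable PP (\<lambda>w. inner (dl w k) (z - xk w (k - 1)))"
    unfolding dl_eq[OF k] by (rule inner_mean_zero(1)[OF xmd_meas xmd_indep[OF k] V indV Vsq])
  show "(\<integral>w. inner (dl w k) (z - xk w (k - 1)) \<partial>PP) = 0"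
    unfolding dl_eq[OF k] by (rule inner_mean_zero(2)[OF xmd_meas xmd_indep[OF k] V indV Vsq])
qed

end


lemma ar1: fixes n :: real assumes n: "n \<ge> 1" shows "1 / (n * (n + 1) * (n + 2) / 6) \<le> 6 / n ^ 3"
proof -
  have "n ^ 3 \<le> n * (n + 1) * (n + 2)" using n by (simp add: power3_eq_cube mult_mono)
  moreover have "n ^ 3 > 0" using n by simp
  ultimately have "6 / (n * (n + 1) * (n + 2)) \<le> 6 / n ^ 3"
    by (intro divide_left_mono) auto
  then show ?thesis by simp
qed

lemma ar2: fixes n :: real assumes n: "n \<ge> 1" shows "n * (n + 1) / (n * (n + 1) * (n + 2) / 6) \<le> 6 / n"
proof -
  have nz: "n \<noteq> 0" "n + 1 \<noteq> 0" "n + 2 \<noteq> 0" using n by auto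
  have e: "n * (n + 1) / (n * (n + 1) * (n + 2) / 6) = 6 / (n + 2)"
  proof -
    have "n * (n + 1) / (n * (n + 1) * (n + 2) / 6) = (n * (n + 1) * 6) / (n * (n + 1) * (n + 2))"
      by simp
    also have "\<dots> = 6 / (n + 2)"
      by (rule nonzero_mult_divide_mult_cancel_left) (use nz in simp)
    finally show ?thesis .
  qed
  have "6 / (n + 2) \<le> 6 / n" using n by (intro divide_left_mono) auto
  then show ?thesis unfolding e .
qed

lemma ar3: fixes n :: real assumes n: "n \<ge> 1" shows "n * (n + 3) / (n * (n + 1) * (n + 2) / 6) \<le> 6 / n"
proof -
  have nz: "n \<noteq> 0" "n + 1 \<noteq> 0" "n + 2 \<noteq> 0" using n by auto
  have e: "n * (n + 3) / (n * (n + 1) * (n + 2) / 6) = 6 * (n + 3) / ((n + 1) * (n + 2))"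
  proof -
    have "n * (n + 3) / (n * (n + 1) * (n + 2) / 6) = (n * (6 * (n + 3))) / (n * ((n + 1) * (n + 2)))"
      by (simp add: ac_simps)
    also have "\<dots> = 6 * (n + 3) / ((n + 1) * (n + 2))"
      by (rule nonzero_mult_divide_mult_cancel_left) (use nz in simp)
    finally show ?thesis .
  qed
  have p1: "(n + 1) * (n + 2) > 0" using n by simp
  have p2: "n > 0" using n by simp
  have "6 * (n + 3) * n \<le> 6 * ((n + 1) * (n + 2))" by (simp add: algebra_simps)
  then have "6 * (n + 3) / ((n + 1) * (n + 2)) \<le> 6 / n"
    using p1 p2 by (simp add: divide_simps)
  then show ?thesis unfolding e .
qed

lemma arith_final:
  fixes n L Lf B r0 D :: real
  assumes n: "n \<ge> 1" and L: "L > 0" and Lf: "0 \<le> Lf" "Lf \<le> L" and B: "B \<ge> 0" and r0: "r0 \<ge> 0"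
  shows "(128 / 3 * L\<^sup>2 * r0 + 32 / 3 * L * Lf * (r0 + B * n * (n + 1)) + 134 / 3 * (L * D\<^sup>2 * n * (n + 3) / 4))
           / (n * (n + 1) * (n + 2) / 6)
         \<le> 96 * L * (4 * L * r0 / n ^ 3 + (Lf * B + 3 * D\<^sup>2) / n)"
proof -
  define P where "P = n * (n + 1) * (n + 2) / 6"
  have P: "P > 0" unfolding P_def using n by simp
  define c1 where "c1 = (128 / 3 * L\<^sup>2 + 32 / 3 * L * Lf) * r0"
  define c2 where "c2 = 32 / 3 * L * Lf * B"
  define c3 where "c3 = 67 / 6 * L * D\<^sup>2"
  have c1: "c1 \<ge> 0" unfolding c1_def using L Lf r0 by simp
  have c2: "c2 \<ge> 0" unfolding c2_def using L Lf B by simp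
  have c3: "c3 \<ge> 0" unfolding c3_def using L by simp
  have eq: "(128 / 3 * L\<^sup>2 * r0 + 32 / 3 * L * Lf * (r0 + B * n * (n + 1)) + 134 / 3 * (L * D\<^sup>2 * n * (n + 3) / 4)) / P
      = c1 * (1 / P) + c2 * (n * (n + 1) / P) + c3 * (n * (n + 3) / P)"
    unfolding c1_def c2_def c3_def using P by (simp add: field_simps)
  have t1: "c1 * (1 / P) \<le> c1 * (6 / n ^ 3)" using ar1[OF n] c1 unfolding P_def by (intro mult_left_mono) auto
  have t2: "c2 * (n * (n + 1) / P) \<le> c2 * (6 / n)" using ar2[OF n] c2 unfolding P_def by (intro mult_left_mono) auto
  have t3: "c3 * (n * (n + 3) / P) \<le> c3 * (6 / n)" using ar3[OF n] c3 unfolding P_def by (intro mult_left_mono) auto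
  have u1: "c1 * (6 / n ^ 3) \<le> 96 * L * (4 * L * r0 / n ^ 3)"
  proof -
    have "c1 * 6 \<le> 96 * L * (4 * L * r0)"
    proof -
      have a: "L * Lf * r0 \<le> L * L * r0" using L Lf r0 by (intro mult_right_mono mult_left_mono) auto
      have b: "0 \<le> L * L * r0" using L r0 by simp
      have e1: "c1 * 6 = 256 * (L * L * r0) + 64 * (L * Lf * r0)" unfolding c1_def by (simp add: power2_eq_square algebra_simps)
      have e2: "96 * L * (4 * L * r0) = 384 * (L * L * r0)" by (simp add: algebra_simps)
      show ?thesis unfolding e1 e2 using a b by linarith
    qed
    then have "c1 * 6 / n ^ 3 \<le> 96 * L * (4 * L * r0) / n ^ 3" using n by (intro divide_right_mono) auto
    then show ?thesis by simp
  qed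
  have u2: "c2 * (6 / n) \<le> 96 * L * (Lf * B / n)"
  proof -
    have "c2 * 6 \<le> 96 * L * (Lf * B)" unfolding c2_def using L Lf B by (simp add: algebra_simps mult_nonneg_nonneg)
    then have "c2 * 6 / n \<le> 96 * L * (Lf * B) / n" using n by (intro divide_right_mono) auto
    then show ?thesis by simp
  qed
  have u3: "c3 * (6 / n) \<le> 96 * L * (3 * D\<^sup>2 / n)"
  proof -
    have "c3 * 6 \<le> 96 * L * (3 * D\<^sup>2)" unfolding c3_def using L by simp
    then have "c3 * 6 / n \<le> 96 * L * (3 * D\<^sup>2) / n" using n by (intro divide_right_mono) auto
    then show ?thesis by simp
  qed
  have r: "96 * L * (4 * L * r0 / n ^ 3 + (Lf * B + 3 * D\<^sup>2) / n)
      = 96 * L * (4 * L * r0 / n ^ 3) + 96 * L * (Lf * B / n) + 96 * L * (3 * D\<^sup>2 / n)"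
    by (simp add: algebra_simps add_divide_distrib)
  show ?thesis unfolding P_def[symmetric] eq r using t1 t2 t3 u1 u2 u3 by linarith
qed


context full
begin

lemma Gt_meas: "(\<lambda>w. Gt w k) \<in> borel_measurable PP"
proof -
  have gm: "(\<lambda>w. g (xmd w k)) \<in> borel_measurable PP"
    by (rule borel_measurable_continuous_on[OF g_cont xmd_meas])
  show ?thesis unfolding Gt_def grad_map_def
    using prox_meas[OF xmd_meas gm bt_pos] xmd_meas
    by (intro borel_measurable_scaleR borel_measurable_diff borel_measurable_const) auto
qed

lemma Ub_props:
  shows "integrable PP (Ub N)" "(\<integral>w. Ub N w \<partial>PP) \<le> C0 N + 134 / 3 * (\<Sum>k = 1..N. TT k * (\<sigma>\<^sup>2 / real (mb k)))"
proof -
  interpret PPp: prob_space PP by (rule prob_PP)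
  have i1: "integrable PP (\<lambda>w. \<Sum>k = 1..N. TT k * (norm (dl w k))\<^sup>2)"
    using dl_sq(1) by (intro Bochner_Integration.integrable_sum integrable_mult_right) auto
  have i2: "integrable PP (\<lambda>w. \<Sum>k = 1..N. real k * inner (dl w k) (z - xk w (k - 1)))"
    using dl_inner(1) by (intro Bochner_Integration.integrable_sum integrable_mult_right) auto
  have ub: "Ub N = (\<lambda>w. C0 N + 134 / 3 * (\<Sum>k = 1..N. TT k * (norm (dl w k))\<^sup>2)
    + 64 * L / 3 * (\<Sum>k = 1..N. real k * inner (dl w k) (z - xk w (k - 1))))"
    unfolding Ub_def[abs_def] ..
  show "integrable PP (Ub N)" unfolding ub using i1 i2 by auto
  have e1: "(\<integral>w. (\<Sum>k = 1..N. TT k * (norm (dl w k))\<^sup>2) \<partial>PP) = (\<Sum>k = 1..N. TT k * (\<integral>w. (norm (dl w k))\<^sup>2 \<partial>PP))"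
    using dl_sq(1) by (subst Bochner_Integration.integral_sum) (auto intro: integrable_mult_right)
  have e2: "(\<integral>w. (\<Sum>k = 1..N. real k * inner (dl w k) (z - xk w (k - 1))) \<partial>PP) = 0"
    using dl_inner by (subst Bochner_Integration.integral_sum) (auto intro: integrable_mult_right)
  have "(\<integral>w. Ub N w \<partial>PP) = C0 N + 134 / 3 * (\<Sum>k = 1..N. TT k * (\<integral>w. (norm (dl w k))\<^sup>2 \<partial>PP))"
    unfolding ub using i1 i2 e1 e2 by (simp add: PPp.prob_space)
  also have "\<dots> \<le> C0 N + 134 / 3 * (\<Sum>k = 1..N. TT k * (\<sigma>\<^sup>2 / real (mb k)))"
    using dl_sq(2) by (intro add_left_mono mult_left_mono sum_mono TT_nonneg) auto
  finally show "(\<integral>w. Ub N w \<partial>PP) \<le> C0 N + 134 / 3 * (\<Sum>k = 1..N. TT k * (\<sigma>\<^sup>2 / real (mb k)))" .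
qed

lemma sum_TT: "(\<Sum>j = 1..N. TT j) = real N * (real N + 1) * (real N + 2) / 6"
  unfolding TT_def by (induction N) (auto simp: field_simps)

lemma Q_bound: "(\<Sum>k = 1..N. TT k * (\<sigma>\<^sup>2 / real (mb k))) \<le> L * Dt\<^sup>2 * real N * (real N + 3) / 4"
proof -
  have "(\<Sum>k = 1..N. TT k * (\<sigma>\<^sup>2 / real (mb k))) \<le> (\<Sum>k = 1..N. L * Dt\<^sup>2 * ((real k + 1) / 2))"
  proof (rule sum_mono)
    fix k assume "k \<in> {1..N}"
    then have k: "k \<ge> 1" by simp
    define q where "q = \<sigma>\<^sup>2 * real k / (L * Dt\<^sup>2)"
    have q: "q > 0" unfolding q_def using k \<sigma>_pos Dt_pos L_pos by simp
    have "\<sigma>\<^sup>2 / real (mb k) \<le> \<sigma>\<^sup>2 / q"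
      using mb_ge[OF k] q unfolding q_def[symmetric] by (intro divide_left_mono) auto
    also have "\<dots> = L * Dt\<^sup>2 / real k" unfolding q_def using \<sigma>_pos k by (simp add: field_simps)
    finally have "TT k * (\<sigma>\<^sup>2 / real (mb k)) \<le> TT k * (L * Dt\<^sup>2 / real k)"
      by (intro mult_left_mono TT_nonneg)
    also have "\<dots> = L * Dt\<^sup>2 * ((real k + 1) / 2)" unfolding TT_def using k by (simp add: field_simps)
    finally show "TT k * (\<sigma>\<^sup>2 / real (mb k)) \<le> L * Dt\<^sup>2 * ((real k + 1) / 2)" .
  qed
  also have "\<dots> = L * Dt\<^sup>2 * ((\<Sum>k = 1..N. real k) / 2 + real N / 2)"
    by (simp add: sum_distrib_left[symmetric] sum.distrib add_divide_distrib sum_divide_distrib[symmetric])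
  also have "\<dots> = L * Dt\<^sup>2 * real N * (real N + 3) / 4"
    unfolding sum_real_id by (simp add: field_simps)
  finally show ?thesis .
qed

lemma final:
  fixes Rd :: "nat pmf"
  assumes N: "N \<ge> 1" and Rd: "\<And>k. pmf Rd k = (if 1 \<le> k \<and> k \<le> N then rsag_prob L N k else 0)"
  shows "(\<integral>\<^sup>+(k, w). ennreal ((norm (Gt w k))\<^sup>2) \<partial>(measure_pmf Rd \<Otimes>\<^sub>M PP))
     \<le> ennreal (96 * L * (4 * L * (norm (x0 - z))\<^sup>2 / (real N)^3 + (Lf * ((norm z)\<^sup>2 + 2 * M\<^sup>2) + 3 * Dt\<^sup>2) / real N))"
proof -
  interpret PPp: prob_space PP by (rule prob_PP)
  define S where "S = (\<Sum>j = 1..N. TT j)"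
  have S_eq: "S = real N * (real N + 1) * (real N + 2) / 6" unfolding S_def by (rule sum_TT)
  have S_pos: "S > 0" unfolding S_eq using N by simp
  define nG where "nG w k = (norm (Gt w k))\<^sup>2" for w k
  have pk: "pmf Rd k = TT k / S" if k: "k \<in> {1..N}" for k
  proof -
    define cc where "cc = rsag_beta L k * (1 - L * rsag_beta L k)"
    have cc: "\<And>j. rsag_beta L j * (1 - L * rsag_beta L j) = cc" unfolding cc_def beta_eq ..
    have ccp: "cc \<noteq> 0" unfolding cc_def beta_eq bt_def using L_pos by simp
    have ig: "\<And>j. inverse (rsag_Gamma j) = TT j" unfolding rsag_Gamma_def TT_def by simp
    have "pmf Rd k = (TT k * cc) / (\<Sum>j = 1..N. TT j * cc)"
      unfolding Rd rsag_prob_def using k by (simp add: ig mult.assoc cc)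
    also have "\<dots> = TT k / S" unfolding S_def sum_distrib_right[symmetric] using ccp by simp
    finally show ?thesis .
  qed
  have measF: "(\<lambda>(k, w). ennreal ((norm (Gt w k))\<^sup>2)) \<in> borel_measurable (measure_pmf Rd \<Otimes>\<^sub>M PP)"
  proof -
    have "(\<lambda>(k, w). ennreal ((norm (Gt w k))\<^sup>2)) \<in> borel_measurable (count_space UNIV \<Otimes>\<^sub>M PP)"
      by (rule measurable_pair_measure_countable1) (use Gt_meas in auto)
    moreover have "sets (measure_pmf Rd \<Otimes>\<^sub>M PP) = sets (count_space UNIV \<Otimes>\<^sub>M PP)"
      by (rule sets_pair_measure_cong) simp_all
    ultimately show ?thesis using measurable_cong_sets by blast
  qed
  have "(\<integral>\<^sup>+(k, w). ennreal ((norm (Gt w k))\<^sup>2) \<partial>(measure_pmf Rd \<Otimes>\<^sub>M PP))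
      = (\<integral>\<^sup>+k. (\<integral>\<^sup>+w. ennreal (nG w k) \<partial>PP) \<partial>measure_pmf Rd)"
    unfolding nG_def using PPp.nn_integral_fst[OF measF] by simp
  also have "\<dots> = (\<Sum>k\<in>{1..N}. (\<integral>\<^sup>+w. ennreal (nG w k) \<partial>PP) * pmf Rd k)"
  proof (rule nn_integral_measure_pmf_support)
    fix k assume "k \<in> set_pmf Rd" "k \<notin> {1..N}"
    then show "(\<integral>\<^sup>+w. ennreal (nG w k) \<partial>PP) = 0" using Rd[of k] by (auto simp: set_pmf_iff split: if_splits)
  qed auto
  also have "\<dots> = (\<Sum>k\<in>{1..N}. (\<integral>\<^sup>+w. ennreal (TT k / S * nG w k) \<partial>PP))"
  proof (rule sum.cong[OF refl])
    fix k assume k: "k \<in> {1..N}"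
    have m: "(\<lambda>w. ennreal (nG w k)) \<in> borel_measurable PP" unfolding nG_def using Gt_meas by measurable
    have "(\<integral>\<^sup>+w. ennreal (nG w k) \<partial>PP) * pmf Rd k = (\<integral>\<^sup>+w. ennreal (nG w k) * ennreal (TT k / S) \<partial>PP)"
      unfolding pk[OF k] by (rule nn_integral_multc[OF m, symmetric])
    also have "\<dots> = (\<integral>\<^sup>+w. ennreal (TT k / S * nG w k) \<partial>PP)"
      using S_pos TT_nonneg[of k] by (intro nn_integral_cong) (simp add: nG_def ennreal_mult[symmetric] mult.commute)
    finally show "(\<integral>\<^sup>+w. ennreal (nG w k) \<partial>PP) * pmf Rd k = (\<integral>\<^sup>+w. ennreal (TT k / S * nG w k) \<partial>PP)" .
  qed
  also have "\<dots> = (\<integral>\<^sup>+w. (\<Sum>k\<in>{1..N}. ennreal (TT k / S * nG w k)) \<partial>PP)"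
    by (rule nn_integral_sum[symmetric]) (unfold nG_def, use Gt_meas in measurable)
  also have "\<dots> = (\<integral>\<^sup>+w. ennreal (\<Sum>k\<in>{1..N}. TT k / S * nG w k) \<partial>PP)"
    using S_pos TT_nonneg by (intro nn_integral_cong sum_ennreal) (auto simp: nG_def)
  also have "\<dots> \<le> (\<integral>\<^sup>+w. ennreal ((1 / S) * Ub N w) \<partial>PP)"
  proof (rule nn_integral_mono, rule ennreal_leI)
    fix w
    have "(\<Sum>k\<in>{1..N}. TT k / S * nG w k) = (1 / S) * (\<Sum>k = 1..N. TT k * nG w k)"
      by (simp add: sum_distrib_left)
    also have "\<dots> \<le> (1 / S) * Ub N w"
      using pathwise[of w N] S_pos unfolding nG_def by (intro mult_left_mono) auto
    finally show "(\<Sum>k\<in>{1..N}. TT k / S * nG w k) \<le> (1 / S) * Ub N w" .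
  qed
  also have "\<dots> = ennreal (\<integral>w. (1 / S) * Ub N w \<partial>PP)"
  proof (rule nn_integral_eq_integral)
    show "integrable PP (\<lambda>w. 1 / S * Ub N w)" using Ub_props(1) by (rule integrable_mult_right)
    show "AE w in PP. 0 \<le> 1 / S * Ub N w"
    proof (rule AE_I2)
      fix w
      have "0 \<le> (\<Sum>k = 1..N. TT k * (norm (Gt w k))\<^sup>2)" by (intro sum_nonneg mult_nonneg_nonneg TT_nonneg) auto
      then have "0 \<le> Ub N w" using pathwise[of w N] by linarith
      then show "0 \<le> 1 / S * Ub N w" using S_pos by simp
    qed
  qed
  also have "\<dots> \<le> ennreal (96 * L * (4 * L * (norm (x0 - z))\<^sup>2 / (real N)^3 + (Lf * ((norm z)\<^sup>2 + 2 * M\<^sup>2) + 3 * Dt\<^sup>2) / real N))"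
  proof (rule ennreal_leI)
    have "(\<integral>w. (1 / S) * Ub N w \<partial>PP) = (1 / S) * (\<integral>w. Ub N w \<partial>PP)" by simp
    also have "\<dots> \<le> (1 / S) * (C0 N + 134 / 3 * (L * Dt\<^sup>2 * real N * (real N + 3) / 4))"
    proof -
      have "134 / 3 * (\<Sum>k = 1..N. TT k * (\<sigma>\<^sup>2 / real (mb k))) \<le> 134 / 3 * (L * Dt\<^sup>2 * real N * (real N + 3) / 4)"
        using Q_bound[of N] by (rule mult_left_mono) simp
      then have "(\<integral>w. Ub N w \<partial>PP) \<le> C0 N + 134 / 3 * (L * Dt\<^sup>2 * real N * (real N + 3) / 4)"
        using Ub_props(2)[of N] by linarith
      then show ?thesis using S_pos by (intro mult_left_mono) auto
    qed
    also have "\<dots> = (128 / 3 * L\<^sup>2 * (norm (x0 - z))\<^sup>2 + 32 / 3 * L * Lf * ((norm (x0 - z))\<^sup>2 + BB * real N * (real N + 1))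
         + 134 / 3 * (L * Dt\<^sup>2 * real N * (real N + 3) / 4)) / (real N * (real N + 1) * (real N + 2) / 6)"
      unfolding C0_def S_eq by (simp add: norm_minus_commute)
    also have "\<dots> \<le> 96 * L * (4 * L * (norm (x0 - z))\<^sup>2 / real N ^ 3 + (Lf * BB + 3 * Dt\<^sup>2) / real N)"
      by (rule arith_final) (use N L_pos Lf_nonneg Lh_nonneg BB_nonneg in auto)
    finally show "(\<integral>w. (1 / S) * Ub N w \<partial>PP) \<le> 96 * L * (4 * L * (norm (x0 - z))\<^sup>2 / (real N)^3 + (Lf * ((norm z)\<^sup>2 + 2 * M\<^sup>2) + 3 * Dt\<^sup>2) / real N)"
      unfolding BB_def .
  qed
  finally show ?thesis .
qed

end



theorem corollary6:
  fixes f h :: "'a::euclidean_space \<Rightarrow> real"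
    and gf gh :: "'a \<Rightarrow> 'a"
    and X :: "'a \<Rightarrow> ereal"
    and Lf Lh M \<sigma> Dt :: real
    and \<Xi> :: "'b measure"
    and G :: "'a \<Rightarrow> 'b \<Rightarrow> 'a"
    and N :: nat
    and Rd :: "nat pmf"
    and x0 xstar :: 'a
  assumes f_grad: "\<And>x. GDERIV f x :> gf x"
    and f_lip: "Lf-lipschitz_on UNIV gf"
    and h_convex: "convex_on UNIV h"
    and h_grad: "\<And>x. GDERIV h x :> gh x"
    and h_lip: "Lh-lipschitz_on UNIV gh"
    and L_pos: "Lf + Lh > 0"
    and X_proper: "proper_efun X"
    and X_closed: "closed_efun X"
    and X_convex: "convex_efun X"
    and X_bdd: "bounded (edom X)"
    and P_bdd: "\<And>x y c. c > 0 \<Longrightarrow> norm (prox_map X x y c) \<le> M"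
    and \<Xi>_prob: "prob_space \<Xi>"
    and G_meas: "(\<lambda>(x, \<xi>). G x \<xi>) \<in> borel_measurable (borel \<Otimes>\<^sub>M \<Xi>)"
    and G_integrable: "\<And>x. integrable \<Xi> (G x)"
    and G_unbiased: "\<And>x. (\<integral>\<xi>. G x \<xi> \<partial>\<Xi>) = gf x + gh x"
    and G_var: "\<And>x. (\<integral>\<^sup>+\<xi>. ennreal ((norm (G x \<xi> - (gf x + gh x)))\<^sup>2) \<partial>\<Xi>) \<le> ennreal (\<sigma>\<^sup>2)"
    and \<sigma>_pos: "\<sigma> > 0"
    and N_ge: "N \<ge> 1"
    and Dt_pos: "Dt > 0"
    and R_dist: "\<And>k. pmf Rd k = (if 1 \<le> k \<and> k \<le> N then rsag_prob (Lf + Lh) N k else 0)"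
    and xstar_opt: "\<And>x. ereal (f xstar + h xstar) + X xstar \<le> ereal (f x + h x) + X x"
  shows "(\<integral>\<^sup>+(k, \<omega>). ennreal ((norm (grad_map X
              (rsag_xmd X G (Lf + Lh) \<sigma> Dt x0 \<omega> k)
              (gf (rsag_xmd X G (Lf + Lh) \<sigma> Dt x0 \<omega> k) + gh (rsag_xmd X G (Lf + Lh) \<sigma> Dt x0 \<omega> k))
              (rsag_beta (Lf + Lh) k)))\<^sup>2)
          \<partial>(measure_pmf Rd \<Otimes>\<^sub>M (\<Pi>\<^sub>M i\<in>UNIV. \<Xi>)))
     \<le> ennreal (96 * (Lf + Lh) * (4 * (Lf + Lh) * (norm (x0 - xstar))\<^sup>2 / (real N)^3
          + (Lf * ((norm xstar)\<^sup>2 + 2 * M\<^sup>2) + 3 * Dt\<^sup>2) / real N))"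
proof -
  have gg_meas: "(\<lambda>x. gf x + gh x) \<in> borel_measurable borel"
  proof (rule borel_measurable_continuous_onI)
    have "continuous_on UNIV gf" using f_lip by (rule lipschitz_on_continuous_on)
    moreover have "continuous_on UNIV gh" using h_lip by (rule lipschitz_on_continuous_on)
    ultimately show "continuous_on UNIV (\<lambda>x. gf x + gh x)" by (intro continuous_intros)
  qed
  interpret I: full X f h gf gh Lf Lh M G \<sigma> Dt x0 xstar \<Xi>
    by (intro full.intro rsag2.intro rsag.intro proxX.intro rsag_axioms.intro rsag2_axioms.intro
        sorcl.intro full_axioms.intro) (simp_all only: assms gg_meas)
  have eq: "(\<lambda>(k, \<omega>). ennreal ((norm (grad_map X
              (rsag_xmd X G (Lf + Lh) \<sigma> Dt x0 \<omega> k)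
              (gf (rsag_xmd X G (Lf + Lh) \<sigma> Dt x0 \<omega> k) + gh (rsag_xmd X G (Lf + Lh) \<sigma> Dt x0 \<omega> k))
              (rsag_beta (Lf + Lh) k)))\<^sup>2))
     = (\<lambda>(k, w). ennreal ((norm (I.Gt w k))\<^sup>2))"
    by (simp add: fun_eq_iff I.Gt_def I.xmd_def I.g_def I.beta_eq)
  have pp: "(\<Pi>\<^sub>M i\<in>UNIV. \<Xi>) = I.PP" unfolding I.PP_def ..
  show ?thesis unfolding eq pp by (rule I.final[OF N_ge R_dist])
qed


end
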